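(* Let $\Omega_{nl}\subset\mathbb{R}^2$ be a bounded, connected, convex domain with $C^3$ boundary, let $\Gamma_i\subset\partial\Omega_{nl}$ be a boundary curve, and let $J_\delta$ be a kernel as described in the context. For $\delta>0$ and $\mathbf{x}\in B\Omega_i$ define $$Q_\delta(\mathbf{x}):=1-\int_{\mathbb{R}^2\setminus\Omega_{nl}} J_{\delta}(|\mathbf{x}-\mathbf{y}|)\left[|(\mathbf{y}-\overline{\mathbf{x}})\cdot\mathbf{n}(\overline{\mathbf{x}})|^2-|(\mathbf{x}-\overline{\mathbf{x}})\cdot\mathbf{n}(\overline{\mathbf{x}})|^2\right]d\mathbf{y}.$$ Then there exists $\overline{\delta}>0$ such that for all $0<\delta\le\overline{\delta}$, $Q_\delta$ is bounded from above and below independently of $\delta$; specifically there is a constant $C_q>0$ independent of $\delta$ such that $$0<\tfrac12-C_q\delta\le Q_\delta(\mathbf{x})\le \tfrac32+C_q\delta\qquad\text{for all }\mathbf{x}\in B\Omega_i.$$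
   Context: Kernel: $J_\delta(r)=\delta^{-4}J(r/\delta)$, where $J:[0,\infty)\to[0,\infty)$ is integrable, nonincreasing, strictly positive on $[0,1]$, vanishes on $(1,\infty)$, and satisfies $\int_{\mathbb{R}^2}J(|\mathbf{z}|)|\mathbf{z}|^2d\mathbf{z}=2$. The horizon $\delta>0$ is assumed small enough that every $\mathbf{x}\in\Omega_{nl}$ within distance $\delta$ of $\Gamma_i$ has a unique orthogonal projection $\overline{\mathbf{x}}$ onto $\Gamma_i$; $\mathbf{n}(\overline{\mathbf{x}})$ denotes the unit exterior normal to $\Omega_{nl}$ at $\overline{\mathbf{x}}$. $B\Omega_i:=\{\mathbf{x}\in\Omega_{nl}:\overline{\mathbf{x}}\in\Gamma_i,\ \mathrm{dist}(\mathbf{x},\Gamma_i)\le\delta\}$. *)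

theory Defs
  imports "HOL-Analysis.Analysis"
begin

definition admissible_kernel :: "(real \<Rightarrow> real) \<Rightarrow> bool" where
  "admissible_kernel J \<longleftrightarrow>
     (\<forall>r\<ge>0. J r \<ge> 0) \<and>
     J integrable_on {0..} \<and>
     (\<forall>r s. 0 \<le> r \<and> r \<le> s \<longrightarrow> J s \<le> J r) \<and>
     (\<forall>r. 0 \<le> r \<and> r \<le> 1 \<longrightarrow> J r > 0) \<and>
     (\<forall>r. r > 1 \<longrightarrow> J r = 0) \<and>
     ((\<lambda>z::real^2. J (norm z) * (norm z)^2) has_integral 2) UNIV"

definition J_delta :: "(real \<Rightarrow> real) \<Rightarrow> real \<Rightarrow> real \<Rightarrow> real" where
  "J_delta J \<delta> r = J (r / \<delta>) / \<delta> ^ 4"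

definition C3_boundary :: "(real^2) set \<Rightarrow> bool" where
  "C3_boundary \<Omega> \<longleftrightarrow>
     (\<exists>(\<gamma>::real \<Rightarrow> real^2) \<gamma>1 \<gamma>2 \<gamma>3 L. L > 0 \<and>
        (\<forall>t. \<gamma> (t + L) = \<gamma> t) \<and> inj_on \<gamma> {0..<L} \<and> \<gamma> ` {0..L} = frontier \<Omega> \<and>
        (\<forall>t. (\<gamma> has_vector_derivative \<gamma>1 t) (at t)) \<and>
        (\<forall>t. (\<gamma>1 has_vector_derivative \<gamma>2 t) (at t)) \<and>
        (\<forall>t. (\<gamma>2 has_vector_derivative \<gamma>3 t) (at t)) \<and>
        continuous_on UNIV \<gamma>3 \<and>
        (\<forall>t. \<gamma>1 t \<noteq> 0))"

definition boundary_curve :: "(real^2) set \<Rightarrow> (real^2) set \<Rightarrow> bool" where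
  "boundary_curve \<Omega> \<Gamma> \<longleftrightarrow> \<Gamma> \<subseteq> frontier \<Omega> \<and> (\<exists>g. path g \<and> path_image g = \<Gamma>)"

definition proj_bd :: "(real^2) set \<Rightarrow> real^2 \<Rightarrow> real^2" where
  "proj_bd \<Omega> x = (SOME p. p \<in> frontier \<Omega> \<and> dist x p = infdist x (frontier \<Omega>))"

definition is_ext_unit_normal :: "(real^2) set \<Rightarrow> real^2 \<Rightarrow> real^2 \<Rightarrow> bool" where
  "is_ext_unit_normal \<Omega> p \<nu> \<longleftrightarrow>
     norm \<nu> = 1 \<and>
     ((\<lambda>y. ((y - p) \<bullet> \<nu>) / norm (y - p)) \<longlongrightarrow> 0) (at p within frontier \<Omega>) \<and>
     (\<forall>\<^sub>F t in at_right 0. p + t *\<^sub>R \<nu> \<notin> closure \<Omega>)"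

definition ext_normal :: "(real^2) set \<Rightarrow> real^2 \<Rightarrow> real^2" where
  "ext_normal \<Omega> p = (THE \<nu>. is_ext_unit_normal \<Omega> p \<nu>)"

definition B_Omega :: "(real^2) set \<Rightarrow> (real^2) set \<Rightarrow> real \<Rightarrow> (real^2) set" where
  "B_Omega \<Omega> \<Gamma> \<delta> = {x \<in> \<Omega>. proj_bd \<Omega> x \<in> \<Gamma> \<and> infdist x \<Gamma> \<le> \<delta>}"

definition Q_delta :: "(real \<Rightarrow> real) \<Rightarrow> (real^2) set \<Rightarrow> real \<Rightarrow> real^2 \<Rightarrow> real" where
  "Q_delta J \<Omega> \<delta> x =
     (let xb = proj_bd \<Omega> x; n = ext_normal \<Omega> xb in
      1 - integral (UNIV - \<Omega>)
            (\<lambda>y. J_delta J \<delta> (norm (x - y)) *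
                 ((\<bar>(y - xb) \<bullet> n\<bar>)^2 - (\<bar>(x - xb) \<bullet> n\<bar>)^2)))"

end

theory Submission
  imports Defs "HOL-Analysis.Analysis"
begin

lemma borel_to_leb:
  fixes f :: "'a::euclidean_space \<Rightarrow> real"
  assumes "f \<in> borel_measurable borel" shows "f \<in> borel_measurable lebesgue"
proof -
  have "f \<in> borel_measurable lborel" using assms by simp
  then show ?thesis using measurable_completion by blast
qed

lemma bcs_abs_integrable:
  fixes f :: "real^2 \<Rightarrow> real"
  assumes f: "f \<in> borel_measurable lebesgue"
    and b: "\<And>w. \<bar>f w\<bar> \<le> M * indicator (cball c R) w"
  shows "f absolutely_integrable_on UNIV"
proof -
  have i0: "indicat_real (cball (c::real^2) R) integrable_on UNIV"
    using integrable_on_indicator[of "cball (c::real^2) R" UNIV] lmeasurable_cball[of "c::real^2" R] by simp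
  have g: "(\<lambda>w. M * indicator (cball (c::real^2) R) w) integrable_on UNIV"
    using integrable_on_cmult_left[OF i0, of M] by simp
  have fm: "f \<in> borel_measurable (lebesgue_on UNIV)"
    using f by (simp only: lebesgue_on_UNIV_eq)
  have bb: "\<And>x. x \<in> UNIV \<Longrightarrow> norm (f x) \<le> M * indicator (cball (c::real^2) R) x"
    using b by (simp only: real_norm_def)
  have U: "UNIV \<in> sets (lebesgue :: (real^2) measure)" by simp
  have fi: "f integrable_on UNIV"
    using measurable_bounded_by_integrable_imp_integrable[OF fm g bb] U by blast
  show ?thesis
    by (rule absolutely_integrable_integrable_bound[OF bb fi g])
qed

lemma vec1_abs_int:
  fixes f :: "real^2 \<Rightarrow> real"
  shows "(\<lambda>x. (vec (f x) :: real^1)) absolutely_integrable_on S \<longleftrightarrow> f absolutely_integrable_on S"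
proof -
  have "\<And>b::real^1. b \<in> Basis \<Longrightarrow> (\<lambda>x. (vec (f x) :: real^1) \<bullet> b) = f"
    by (auto simp: Basis_vec_def inner_axis)
  moreover have "(Basis :: (real^1) set) \<noteq> {}" by simp
  ultimately show ?thesis
    by (auto simp: absolutely_integrable_componentwise_iff[where f="(\<lambda>x. (vec (f x) :: real^1))"])
qed

lemma vec1_integral:
  fixes f :: "real^2 \<Rightarrow> real"
  assumes "f integrable_on S"
  shows "integral S (\<lambda>x. (vec (f x) :: real^1)) = vec (integral S f)"
proof -
  have i: "(\<lambda>x. (vec (f x) :: real^1)) integrable_on S"
    using assms integrable_on_iff_component[of "(\<lambda>x. (vec (f x) :: real^1))"] 
    by (auto simp: Basis_vec_def inner_axis)
  have "integral S (\<lambda>x. (vec (f x) :: real^1)) $ 1 = integral S f"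
  proof -
    have "integral S (\<lambda>x. (vec (f x) :: real^1)) \<bullet> axis 1 1 = integral S (\<lambda>x. (vec (f x) :: real^1) \<bullet> axis 1 1)"
      using integral_component_eq[OF i] by simp
    then show ?thesis by (simp add: inner_axis)
  qed
  then show ?thesis
    by (simp add: vec_eq_iff forall_1)
qed

lemma cov_lin:
  fixes f :: "real^2 \<Rightarrow> real" and g :: "real^2 \<Rightarrow> real^2"
  assumes g: "linear g" "bij g" and f: "f absolutely_integrable_on UNIV"
  shows "(\<lambda>w. f (c + g w)) absolutely_integrable_on UNIV"
    and "integral UNIV f = \<bar>det (matrix g)\<bar> * integral UNIV (\<lambda>w. f (c + g w))"
proof -
  let ?f1 = "\<lambda>x. (vec (f x) :: real^1)"
  let ?G = "\<lambda>w. c + g w"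
  have der: "\<And>x. (?G has_derivative g) (at x within UNIV)"
    using g(1) by (auto intro!: derivative_eq_intros simp: linear_imp_has_derivative)
  have inj: "inj_on ?G UNIV" using g(2) by (auto simp: bij_def inj_on_def)
  have surj: "?G ` UNIV = UNIV"
  proof -
    have "\<And>y. y \<in> range ?G"
    proof -
      fix y
      obtain w where "y - c = g w" using surjD[OF bij_is_surj[OF g(2)]] by blast
      then have "y = ?G w" by (simp add: algebra_simps)
      then show "y \<in> range ?G" by blast
    qed
    then show ?thesis by auto
  qed
  have f1: "?f1 absolutely_integrable_on UNIV" using f vec1_abs_int by blast
  have H: "(\<lambda>x. \<bar>det (matrix g)\<bar> *\<^sub>R ?f1 (?G x)) absolutely_integrable_on UNIV \<and>
           integral UNIV (\<lambda>x. \<bar>det (matrix g)\<bar> *\<^sub>R ?f1 (?G x)) = integral UNIV ?f1"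
    using has_absolute_integral_change_of_variables[of UNIV ?G "\<lambda>_. g" ?f1 "integral UNIV ?f1", OF _ der inj]
      f1 surj by simp
  have detnz: "det (matrix g) \<noteq> 0"
    using det_nz_iff_inj[OF g(1)] bij_is_inj[OF g(2)] by blast
  have "(\<lambda>x. \<bar>det (matrix g)\<bar> *\<^sub>R f (?G x)) absolutely_integrable_on UNIV"
    using H vec1_abs_int[where f="\<lambda>x. \<bar>det (matrix g)\<bar> *\<^sub>R f (?G x)"] by (simp add: vec_scaleR)
  then show A: "(\<lambda>w. f (c + g w)) absolutely_integrable_on UNIV"
    using detnz absolutely_integrable_on_scaleR_iff[where c="\<bar>det (matrix g)\<bar>" and f="\<lambda>x. f (?G x)" and S=UNIV] by simp
  have i1: "(\<lambda>x. \<bar>det (matrix g)\<bar> *\<^sub>R f (?G x)) integrable_on UNIV"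
    using \<open>(\<lambda>x. \<bar>det (matrix g)\<bar> *\<^sub>R f (?G x)) absolutely_integrable_on UNIV\<close>
    by (simp add: absolutely_integrable_on_def)
  have e1: "integral UNIV (\<lambda>x. \<bar>det (matrix g)\<bar> *\<^sub>R ?f1 (?G x)) = integral UNIV (\<lambda>x. vec (\<bar>det (matrix g)\<bar> *\<^sub>R f (?G x)))"
    by (simp add: vec_scaleR)
  have "vec (integral UNIV (\<lambda>x. \<bar>det (matrix g)\<bar> *\<^sub>R f (?G x))) = (vec (integral UNIV f) :: real^1)"
    using H e1 vec1_integral[OF i1] vec1_integral[of f UNIV] f
    by (simp add: absolutely_integrable_on_def)
  then have e2: "integral UNIV (\<lambda>x. \<bar>det (matrix g)\<bar> *\<^sub>R f (?G x)) = integral UNIV f"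
    by simp
  have e3: "integral UNIV (\<lambda>x. \<bar>det (matrix g)\<bar> *\<^sub>R f (?G x)) = \<bar>det (matrix g)\<bar> * integral UNIV (\<lambda>x. f (?G x))"
    by (simp only: real_scaleR_def integral_mult_right)
  show "integral UNIV f = \<bar>det (matrix g)\<bar> * integral UNIV (\<lambda>w. f (c + g w))"
    using e2 e3 by argo
qed

lemma per_nat:
  fixes \<gamma> :: "real \<Rightarrow> 'a"
  assumes per: "\<forall>t. \<gamma> (t + L) = \<gamma> t"
  shows "\<gamma> (t + real n * L) = \<gamma> t"
proof (induction n)
  case 0 then show ?case by simp
next
  case (Suc n)
  have "t + real (Suc n) * L = (t + real n * L) + L" by (simp add: algebra_simps)
  then have "\<gamma> (t + real (Suc n) * L) = \<gamma> ((t + real n * L) + L)" by (simp add: algebra_simps)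
  also have "\<dots> = \<gamma> (t + real n * L)" using per by blast
  finally show ?case using Suc by simp
qed

lemma per_red:
  fixes \<gamma> :: "real \<Rightarrow> 'a"
  assumes per: "\<forall>t. \<gamma> (t + L) = \<gamma> t" and L: "L > 0"
  shows "\<exists>s\<in>{0..<L}. \<gamma> s = \<gamma> t"
proof -
  define k where "k = \<lfloor>t / L\<rfloor>"
  define s where "s = t - real_of_int k * L"
  have k1: "real_of_int k \<le> t / L" and k2: "t / L < real_of_int k + 1"
    unfolding k_def by linarith+
  have "real_of_int k * L \<le> t" using k1 L by (simp add: pos_le_divide_eq)
  moreover have "t < (real_of_int k + 1) * L" using k2 L by (simp add: pos_divide_less_eq)
  ultimately have s: "s \<in> {0..<L}" unfolding s_def by (auto simp: algebra_simps)
  have "\<gamma> s = \<gamma> t"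
  proof (cases "k \<ge> 0")
    case True
    then have "t = s + real (nat k) * L" unfolding s_def by simp
    then show ?thesis using per_nat[OF per, of s "nat k"] by simp
  next
    case False
    then have "s = t + real (nat (-k)) * L" unfolding s_def by simp
    then show ?thesis using per_nat[OF per, of t "nat (-k)"] by simp
  qed
  then show ?thesis using s by blast
qed

lemma two_perp:
  fixes v \<mu> \<nu> :: "real^2"
  assumes "v \<noteq> 0" "\<mu> \<bullet> v = 0" "\<nu> \<bullet> v = 0" "norm \<mu> = 1" "norm \<nu> = 1"
  shows "\<mu> = \<nu> \<or> \<mu> = - \<nu>"
proof -
  have iv: "\<And>a b :: real^2. a \<bullet> b = a$1 * b$1 + a$2 * b$2"
    by (simp add: inner_vec_def sum_2)
  have nv: "(norm a)^2 = (a$1)^2 + (a$2)^2" for a :: "real^2"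
  proof -
    have "(norm a)^2 = a \<bullet> a" by (rule power2_norm_eq_inner)
    also have "\<dots> = (a$1)^2 + (a$2)^2" by (simp add: iv power2_eq_square)
    finally show ?thesis .
  qed
  have m: "(\<mu>$1)^2 + (\<mu>$2)^2 = 1" using nv[of \<mu>] assms(4) by simp
  have n: "(\<nu>$1)^2 + (\<nu>$2)^2 = 1" using nv[of \<nu>] assms(5) by simp
  have pm: "\<mu>$1 * v$1 + \<mu>$2 * v$2 = 0" using assms(2) iv by simp
  have pn: "\<nu>$1 * v$1 + \<nu>$2 * v$2 = 0" using assms(3) iv by simp
  have vnz: "v$1 \<noteq> 0 \<or> v$2 \<noteq> 0" using assms(1) by (metis exhaust_2 vec_eq_iff zero_index)
  have cross: "\<mu>$1 * \<nu>$2 = \<mu>$2 * \<nu>$1"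
  proof (cases "v$1 = 0")
    case True
    then have "v$2 \<noteq> 0" using vnz by simp
    then have "\<mu>$2 = 0" "\<nu>$2 = 0" using pm pn True by simp_all
    then show ?thesis by simp
  next
    case False
    have a1: "\<mu>$1 * v$1 = - (\<mu>$2 * v$2)" using pm by linarith
    have a2: "\<nu>$1 * v$1 = - (\<nu>$2 * v$2)" using pn by linarith
    have "v$1 * (\<mu>$1 * \<nu>$2 - \<mu>$2 * \<nu>$1) = \<nu>$2 * (\<mu>$1 * v$1) - \<mu>$2 * (\<nu>$1 * v$1)"
      by (simp add: algebra_simps)
    also have "\<dots> = 0" unfolding a1 a2 by (simp add: algebra_simps)
    finally show ?thesis using False by simp
  qed
  define c where "c = \<mu> \<bullet> \<nu>"
  have c1a: "\<mu>$1 = c * \<nu>$1"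
  proof -
    have "c * \<nu>$1 = \<mu>$1 * \<nu>$1 * \<nu>$1 + (\<mu>$2 * \<nu>$1) * \<nu>$2" by (simp add: c_def iv algebra_simps)
    also have "\<dots> = \<mu>$1 * \<nu>$1 * \<nu>$1 + (\<mu>$1 * \<nu>$2) * \<nu>$2" using cross by simp
    also have "\<dots> = \<mu>$1 * ((\<nu>$1)^2 + (\<nu>$2)^2)" by (simp add: algebra_simps power2_eq_square)
    finally show ?thesis using n by simp
  qed
  have c1b: "\<mu>$2 = c * \<nu>$2"
  proof -
    have "c * \<nu>$2 = (\<mu>$1 * \<nu>$2) * \<nu>$1 + \<mu>$2 * \<nu>$2 * \<nu>$2" by (simp add: c_def iv algebra_simps)
    also have "\<dots> = (\<mu>$2 * \<nu>$1) * \<nu>$1 + \<mu>$2 * \<nu>$2 * \<nu>$2" using cross by simp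
    also have "\<dots> = \<mu>$2 * ((\<nu>$1)^2 + (\<nu>$2)^2)" by (simp add: algebra_simps power2_eq_square)
    finally show ?thesis using n by simp
  qed
  note c1 = c1a c1b
  have "c^2 = c^2 * ((\<nu>$1)^2 + (\<nu>$2)^2)" using n by simp
  also have "\<dots> = (c * \<nu>$1)^2 + (c * \<nu>$2)^2" by (simp add: algebra_simps power2_eq_square)
  also have "\<dots> = 1" using m c1 by simp
  finally have "c^2 = 1" .
  then have "c = 1 \<or> c = -1" by (simp add: power2_eq_1_iff)
  then show ?thesis
    using c1 by (auto simp: vec_eq_iff forall_2)
qed

lemma curve_G1:
  fixes \<gamma> \<gamma>1 \<gamma>2 :: "real \<Rightarrow> real^2"
  assumes d1: "\<And>t. (\<gamma> has_vector_derivative \<gamma>1 t) (at t)"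
    and d2: "\<And>t. (\<gamma>1 has_vector_derivative \<gamma>2 t) (at t)"
    and M2: "\<And>s. s \<in> I0 \<Longrightarrow> norm (\<gamma>2 s) \<le> M2"
    and I0: "is_interval I0" and t0: "t0 \<in> I0" and t: "t \<in> I0"
  shows "norm (\<gamma> t - \<gamma> t0 - (t - t0) *\<^sub>R \<gamma>1 t0) \<le> 3 * M2 * (t - t0)^2"
proof -
  define S where "S = closed_segment t0 t"
  have cS: "convex S" unfolding S_def by simp
  have t0S: "t0 \<in> S" and tS: "t \<in> S" unfolding S_def by auto
  have SI: "S \<subseteq> I0" unfolding S_def
    using I0 t0 t by (simp add: closed_segment_subset is_interval_convex)
  have near: "\<bar>s - t0\<bar> \<le> \<bar>t - t0\<bar>" if "s \<in> S" for s
    using that unfolding S_def closed_segment_eq_real_ivl by (auto split: if_splits)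
  have b1: "norm (\<gamma>1 s - \<gamma>1 t0) \<le> 3 * M2 * \<bar>t - t0\<bar>" if s: "s \<in> S" for s
  proof -
    have A1: "norm (\<gamma>1 s - \<gamma>1 t0 - (s - t0) *\<^sub>R \<gamma>2 t0) \<le> norm (s - t0) * (2 * M2)"
    proof (rule vector_differentiable_bound_linearization[where S=S and B="2 * M2"])
      show "\<And>x. x \<in> S \<Longrightarrow> (\<gamma>1 has_vector_derivative \<gamma>2 x) (at x within S)"
        using d2 has_vector_derivative_at_within by blast
      show "closed_segment t0 s \<subseteq> S" using cS t0S s closed_segment_subset by blast
      show "norm (\<gamma>2 x - \<gamma>2 t0) \<le> 2 * M2" if "x \<in> S" for x
      proof -
        have "norm (\<gamma>2 x - \<gamma>2 t0) \<le> norm (\<gamma>2 x) + norm (\<gamma>2 t0)" by (rule norm_triangle_ineq4)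
        also have "\<dots> \<le> M2 + M2" using M2 that SI t0 by (meson add_mono subsetD)
        finally show ?thesis by simp
      qed
      show "t0 \<in> S" by (rule t0S)
    qed
    have A1': "norm (\<gamma>1 s - \<gamma>1 t0 - (s - t0) *\<^sub>R \<gamma>2 t0) \<le> \<bar>s - t0\<bar> * (2 * M2)"
      using A1 by simp
    have A2: "norm ((s - t0) *\<^sub>R \<gamma>2 t0) \<le> \<bar>s - t0\<bar> * M2"
      using M2[OF t0] by (simp add: mult_left_mono)
    have "norm (\<gamma>1 s - \<gamma>1 t0) \<le> \<bar>s - t0\<bar> * (2 * M2) + \<bar>s - t0\<bar> * M2"
      using norm_triangle_sub[of "\<gamma>1 s - \<gamma>1 t0" "(s - t0) *\<^sub>R \<gamma>2 t0"] A1' A2 by linarith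
    also have "\<dots> = 3 * M2 * \<bar>s - t0\<bar>" by (simp add: algebra_simps)
    also have "\<dots> \<le> 3 * M2 * \<bar>t - t0\<bar>"
    proof -
      have "0 \<le> M2" using M2[OF t0] norm_ge_zero order_trans by blast
      then show ?thesis using near[OF s] by (simp add: mult_left_mono)
    qed
    finally show ?thesis .
  qed
  have "norm (\<gamma> t - \<gamma> t0 - (t - t0) *\<^sub>R \<gamma>1 t0) \<le> norm (t - t0) * (3 * M2 * \<bar>t - t0\<bar>)"
  proof (rule vector_differentiable_bound_linearization[where S=S and B="3 * M2 * \<bar>t - t0\<bar>"])
    show "\<And>x. x \<in> S \<Longrightarrow> (\<gamma> has_vector_derivative \<gamma>1 x) (at x within S)"
      using d1 has_vector_derivative_at_within by blast
    show "closed_segment t0 t \<subseteq> S" unfolding S_def by simp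
    show "\<And>x. x \<in> S \<Longrightarrow> norm (\<gamma>1 x - \<gamma>1 t0) \<le> 3 * M2 * \<bar>t - t0\<bar>" by (rule b1)
    show "t0 \<in> S" by (rule t0S)
  qed
  also have "\<dots> = 3 * M2 * (t - t0)^2" by (simp add: power2_eq_square abs_mult_self_eq)
  finally show ?thesis .
qed

definition tanlim :: "(real^2) set \<Rightarrow> real^2 \<Rightarrow> real^2 \<Rightarrow> bool" where
  "tanlim \<Omega> p \<mu> \<longleftrightarrow> ((\<lambda>y. ((y - p) \<bullet> \<mu>) / norm (y - p)) \<longlongrightarrow> 0) (at p within frontier \<Omega>)"

lemma curve_main:
  fixes \<Omega> :: "(real^2) set"
  assumes "C3_boundary \<Omega>"
  shows "\<exists>r0>0. \<exists>K>0. \<forall>p\<in>frontier \<Omega>. \<exists>v::real^2. v \<noteq> 0 \<and> (\<forall>\<mu>. tanlim \<Omega> p \<mu> \<longrightarrow> \<mu> \<bullet> v = 0) \<and>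
     (\<forall>\<nu>. norm \<nu> = 1 \<longrightarrow> \<nu> \<bullet> v = 0 \<longrightarrow>
        (\<forall>q\<in>frontier \<Omega>. dist q p < r0 \<longrightarrow> \<bar>(q - p) \<bullet> \<nu>\<bar> \<le> K * (dist q p)^2))"
proof -
  obtain \<gamma> :: "real \<Rightarrow> real^2" and \<gamma>1 \<gamma>2 \<gamma>3 L where L: "L > 0"
    and per: "\<forall>t. \<gamma> (t + L) = \<gamma> t" and inj: "inj_on \<gamma> {0..<L}" and img: "\<gamma> ` {0..L} = frontier \<Omega>"
    and d1: "\<And>t. (\<gamma> has_vector_derivative \<gamma>1 t) (at t)"
    and d2: "\<And>t. (\<gamma>1 has_vector_derivative \<gamma>2 t) (at t)"
    and d3: "\<And>t. (\<gamma>2 has_vector_derivative \<gamma>3 t) (at t)"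
    and nz: "\<And>t. \<gamma>1 t \<noteq> 0"
    using assms unfolding C3_boundary_def by blast
  have c\<gamma>: "continuous_on UNIV \<gamma>"
    using d1 has_vector_derivative_continuous continuous_at_imp_continuous_on by blast
  have c\<gamma>1: "continuous_on UNIV \<gamma>1"
    using d2 has_vector_derivative_continuous continuous_at_imp_continuous_on by blast
  have c\<gamma>2: "continuous_on UNIV \<gamma>2"
    using d3 has_vector_derivative_continuous continuous_at_imp_continuous_on by blast
  define I0 where "I0 = {-1..L+1::real}"
  have I0c: "compact I0" "I0 \<noteq> {}" "is_interval I0" using L by (auto simp: I0_def)
  obtain tm where tm: "tm \<in> I0" "\<forall>s\<in>I0. norm (\<gamma>1 tm) \<le> norm (\<gamma>1 s)"
    using continuous_attains_inf[OF I0c(1) I0c(2), of "\<lambda>s. norm (\<gamma>1 s)"]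
      continuous_on_norm[OF continuous_on_subset[OF c\<gamma>1 subset_UNIV]] by auto
  define m where "m = norm (\<gamma>1 tm)"
  have m0: "m > 0" using nz[of tm] by (simp add: m_def)
  have mle: "\<And>s. s \<in> I0 \<Longrightarrow> m \<le> norm (\<gamma>1 s)" using tm m_def by auto
  have "bounded (\<gamma>2 ` I0)"
    using compact_imp_bounded[OF compact_continuous_image[OF continuous_on_subset[OF c\<gamma>2 subset_UNIV] I0c(1)]] .
  then obtain M2 where M2pos: "M2 > 0" and M2b: "\<forall>x\<in>\<gamma>2 ` I0. norm x \<le> M2"
    unfolding bounded_pos by blast
  have M2: "\<And>s. s \<in> I0 \<Longrightarrow> norm (\<gamma>2 s) \<le> M2" using M2b by blast
  have G1: "\<And>t0 t. t0 \<in> I0 \<Longrightarrow> t \<in> I0 \<Longrightarrow> norm (\<gamma> t - \<gamma> t0 - (t - t0) *\<^sub>R \<gamma>1 t0) \<le> 3 * M2 * (t - t0)^2"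
    using curve_G1[OF d1 d2 M2 I0c(3)] by blast
  define \<eta> where "\<eta> = min 1 (m / (6 * M2))"
  have \<eta>: "\<eta> > 0" "\<eta> \<le> 1" "3 * M2 * \<eta> \<le> m / 2"
  proof -
    show "\<eta> > 0" using m0 M2pos by (simp add: \<eta>_def)
    show "\<eta> \<le> 1" by (simp add: \<eta>_def)
    have "\<eta> \<le> m / (6 * M2)" by (simp add: \<eta>_def)
    then have "3 * M2 * \<eta> \<le> 3 * M2 * (m / (6 * M2))" using M2pos by (intro mult_left_mono) auto
    also have "\<dots> = m / 2" using M2pos by (simp add: field_simps)
    finally show "3 * M2 * \<eta> \<le> m / 2" .
  qed
  have inI0: "t \<in> I0" "t0 \<in> I0" if "t0 \<in> {0..L}" "\<bar>t - t0\<bar> \<le> \<eta>" for t0 t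
    using that \<eta>(2) by (auto simp: I0_def)
  have Glow: "m / 2 * \<bar>t - t0\<bar> \<le> norm (\<gamma> t - \<gamma> t0)" if a: "t0 \<in> {0..L}" "\<bar>t - t0\<bar> \<le> \<eta>" for t0 t
  proof -
    have i: "t \<in> I0" "t0 \<in> I0" using inI0[OF a] by auto
    have e: "norm (\<gamma> t - \<gamma> t0 - (t - t0) *\<^sub>R \<gamma>1 t0) \<le> 3 * M2 * (t - t0)^2" using G1 i by blast
    have "(t - t0)^2 = \<bar>t - t0\<bar> * \<bar>t - t0\<bar>" by (simp add: power2_eq_square abs_mult_self_eq)
    also have "\<dots> \<le> \<eta> * \<bar>t - t0\<bar>" using a(2) by (intro mult_right_mono) auto
    finally have "3 * M2 * (t - t0)^2 \<le> 3 * M2 * (\<eta> * \<bar>t - t0\<bar>)" using M2pos by simp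
    also have "\<dots> = (3 * M2 * \<eta>) * \<bar>t - t0\<bar>" by simp
    also have "\<dots> \<le> m / 2 * \<bar>t - t0\<bar>" using \<eta>(3) by (intro mult_right_mono) auto
    finally have e2: "norm (\<gamma> t - \<gamma> t0 - (t - t0) *\<^sub>R \<gamma>1 t0) \<le> m / 2 * \<bar>t - t0\<bar>" using e by linarith
    have e3': "m * \<bar>t - t0\<bar> \<le> norm (\<gamma>1 t0) * \<bar>t - t0\<bar>"
      using mle[OF i(2)] by (intro mult_right_mono) auto
    have e3: "m * \<bar>t - t0\<bar> \<le> norm ((t - t0) *\<^sub>R \<gamma>1 t0)"
      using e3' by (simp add: mult.commute)
    have e4: "norm ((t - t0) *\<^sub>R \<gamma>1 t0) \<le> norm (\<gamma> t - \<gamma> t0) + norm (\<gamma> t - \<gamma> t0 - (t - t0) *\<^sub>R \<gamma>1 t0)"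
      using norm_triangle_sub[of "(t - t0) *\<^sub>R \<gamma>1 t0" "\<gamma> t - \<gamma> t0"] by (simp add: norm_minus_commute)
    show ?thesis using e2 e3 e4 by linarith
  qed
  define K where "K = 12 * M2 / m^2"
  have Kpos: "K > 0" using M2pos m0 by (simp add: K_def)
  have Gq: "\<bar>(\<gamma> t - \<gamma> t0) \<bullet> \<nu>\<bar> \<le> K * (norm (\<gamma> t - \<gamma> t0))^2"
    if a: "t0 \<in> {0..L}" "\<bar>t - t0\<bar> \<le> \<eta>" and \<nu>: "\<nu> \<bullet> \<gamma>1 t0 = 0" "norm \<nu> = 1" for t0 t \<nu>
  proof -
    have i: "t \<in> I0" "t0 \<in> I0" using inI0[OF a] by auto
    have "(\<gamma> t - \<gamma> t0) \<bullet> \<nu> = (\<gamma> t - \<gamma> t0 - (t - t0) *\<^sub>R \<gamma>1 t0) \<bullet> \<nu>"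
      using \<nu>(1) by (simp add: inner_diff_left inner_diff_right inner_scaleR_right inner_commute)
    then have "\<bar>(\<gamma> t - \<gamma> t0) \<bullet> \<nu>\<bar> \<le> norm (\<gamma> t - \<gamma> t0 - (t - t0) *\<^sub>R \<gamma>1 t0) * norm \<nu>"
      using Cauchy_Schwarz_ineq2 by metis
    also have "\<dots> \<le> 3 * M2 * (t - t0)^2" using G1[OF i(2) i(1)] \<nu>(2) by simp
    also have "\<dots> \<le> 3 * M2 * (4 / m^2 * (norm (\<gamma> t - \<gamma> t0))^2)"
    proof -
      have l: "m / 2 * \<bar>t - t0\<bar> \<le> norm (\<gamma> t - \<gamma> t0)" by (rule Glow[OF a])
      have "(m / 2 * \<bar>t - t0\<bar>)^2 \<le> (norm (\<gamma> t - \<gamma> t0))^2"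
        using l m0 by (intro power_mono) auto
      then have "m^2 / 4 * (t - t0)^2 \<le> (norm (\<gamma> t - \<gamma> t0))^2"
        by (simp add: power_mult_distrib power_divide)
      then have "(t - t0)^2 \<le> 4 / m^2 * (norm (\<gamma> t - \<gamma> t0))^2"
        using m0 by (simp add: field_simps)
      then show ?thesis using M2pos by (intro mult_left_mono) auto
    qed
    also have "\<dots> = K * (norm (\<gamma> t - \<gamma> t0))^2" by (simp add: K_def)
    finally show ?thesis .
  qed
  have \<gamma>L: "\<gamma> L = \<gamma> 0" using per by (metis add_0)
  have injarg: False if a: "a \<in> {0..L}" and b: "b \<in> {0..L}" and e: "\<gamma> a = \<gamma> b"
     and l1: "\<eta> \<le> \<bar>a - b\<bar>" and l2: "\<bar>a - b\<bar> \<le> L - \<eta>" for a b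
  proof -
    define a' where "a' = (if a = L then 0 else a)"
    define b' where "b' = (if b = L then 0 else b)"
    have a': "a' \<in> {0..<L}" "\<gamma> a' = \<gamma> a" using a L \<gamma>L unfolding a'_def by auto
    have b': "b' \<in> {0..<L}" "\<gamma> b' = \<gamma> b" using b L \<gamma>L unfolding b'_def by auto
    have "a' = b'" using inj a'(1) b'(1) a'(2) b'(2) e by (metis inj_onD)
    then show False using l1 l2 \<eta>(1) a b unfolding a'_def b'_def by (auto split: if_splits)
  qed
  obtain r0 where r0: "r0 > 0" and r0b: "\<And>a b. a \<in> {0..L} \<Longrightarrow> b \<in> {0..L} \<Longrightarrow> dist (\<gamma> a) (\<gamma> b) < r0 \<Longrightarrow>
      \<bar>a - b\<bar> < \<eta> \<or> L - \<eta> < \<bar>a - b\<bar>"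
  proof -
    define KS where "KS = ({0..L} \<times> {0..L}) \<inter> {z. \<eta> \<le> \<bar>fst z - snd z\<bar>} \<inter> {z. \<bar>fst z - snd z\<bar> \<le> L - \<eta>}"
    have cKS: "compact KS"
      unfolding KS_def
      by (intro compact_Int_closed compact_Times compact_Icc closed_Collect_le continuous_intros)
    show ?thesis
    proof (cases "KS = {}")
      case True
      show ?thesis
      proof (rule that[of 1])
        fix a b assume "a \<in> {0..L}" "b \<in> {0..L}"
        then have "(a, b) \<notin> KS \<Longrightarrow> \<bar>a - b\<bar> < \<eta> \<or> L - \<eta> < \<bar>a - b\<bar>" unfolding KS_def by auto
        then show "\<bar>a - b\<bar> < \<eta> \<or> L - \<eta> < \<bar>a - b\<bar>" using True by blast
      qed simp
    next
      case False
      have cf: "continuous_on UNIV (\<lambda>y::real\<times>real. \<gamma> (fst y))"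
        by (rule continuous_on_compose2[OF c\<gamma> continuous_on_fst[OF continuous_on_id]]) auto
      have cs: "continuous_on UNIV (\<lambda>y::real\<times>real. \<gamma> (snd y))"
        by (rule continuous_on_compose2[OF c\<gamma> continuous_on_snd[OF continuous_on_id]]) auto
      have cd: "continuous_on KS (\<lambda>y. dist (\<gamma> (fst y)) (\<gamma> (snd y)))"
        using continuous_on_subset[OF continuous_on_dist[OF cf cs]] by blast
      obtain z where z: "z \<in> KS" "\<forall>y\<in>KS. dist (\<gamma> (fst z)) (\<gamma> (snd z)) \<le> dist (\<gamma> (fst y)) (\<gamma> (snd y))"
        using continuous_attains_inf[OF cKS False cd] by blast
      have pos: "dist (\<gamma> (fst z)) (\<gamma> (snd z)) > 0"
      proof (rule ccontr)
        assume "\<not> ?thesis"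
        then have "\<gamma> (fst z) = \<gamma> (snd z)" by simp
        then show False using injarg[of "fst z" "snd z"] z(1) unfolding KS_def by auto
      qed
      show ?thesis
      proof (rule that[OF pos])
        fix a b assume ab: "a \<in> {0..L}" "b \<in> {0..L}" "dist (\<gamma> a) (\<gamma> b) < dist (\<gamma> (fst z)) (\<gamma> (snd z))"
        then have "(a, b) \<notin> KS" using z(2) by force
        then show "\<bar>a - b\<bar> < \<eta> \<or> L - \<eta> < \<bar>a - b\<bar>" using ab unfolding KS_def by auto
      qed
    qed
  qed
  have inF: "\<gamma> t \<in> frontier \<Omega>" for t
  proof -
    obtain s where s: "s \<in> {0..<L}" "\<gamma> s = \<gamma> t" using per_red[OF per L, of t] by blast
    then have "s \<in> {0..L}" by auto
    then have "\<gamma> s \<in> \<gamma> ` {0..L}" by (rule imageI)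
    then show ?thesis using img s(2) by simp
  qed
  have main: "\<exists>v::real^2. v \<noteq> 0 \<and> (\<forall>\<mu>. tanlim \<Omega> p \<mu> \<longrightarrow> \<mu> \<bullet> v = 0) \<and>
     (\<forall>\<nu>. norm \<nu> = 1 \<longrightarrow> \<nu> \<bullet> v = 0 \<longrightarrow>
        (\<forall>q\<in>frontier \<Omega>. dist q p < r0 \<longrightarrow> \<bar>(q - p) \<bullet> \<nu>\<bar> \<le> K * (dist q p)^2))"
    if p: "p \<in> frontier \<Omega>" for p
  proof -
    obtain t0 where t0: "t0 \<in> {0..L}" "p = \<gamma> t0" using p img by force
    have quad: "\<bar>(q - p) \<bullet> \<nu>\<bar> \<le> K * (dist q p)^2"
      if \<nu>: "norm \<nu> = 1" "\<nu> \<bullet> \<gamma>1 t0 = 0" and q: "q \<in> frontier \<Omega>" "dist q p < r0" for \<nu> q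
    proof -
      obtain b where b: "b \<in> {0..L}" "q = \<gamma> b" using q(1) img by force
      have alt: "\<bar>b - t0\<bar> < \<eta> \<or> L - \<eta> < \<bar>b - t0\<bar>" using r0b[OF b(1) t0(1)] q(2) b(2) t0(2) by simp
      obtain b' where b': "\<gamma> b' = \<gamma> b" "\<bar>b' - t0\<bar> \<le> \<eta>"
      proof (cases "\<bar>b - t0\<bar> < \<eta>")
        case True
        then show ?thesis using that[of b] by simp
      next
        case F: False
        then have l: "L - \<eta> < \<bar>b - t0\<bar>" using alt by simp
        show ?thesis
        proof (cases "t0 \<le> b")
          case True
          have "\<gamma> (b - L) = \<gamma> b" using per[rule_format, of "b - L"] by simp
          moreover have "\<bar>(b - L) - t0\<bar> \<le> \<eta>" using True l b(1) t0(1) by auto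
          ultimately show ?thesis by (rule that)
        next
          case False
          have "\<gamma> (b + L) = \<gamma> b" using per by simp
          moreover have "\<bar>(b + L) - t0\<bar> \<le> \<eta>" using False l b(1) t0(1) by auto
          ultimately show ?thesis by (rule that)
        qed
      qed
      have "\<bar>(\<gamma> b' - \<gamma> t0) \<bullet> \<nu>\<bar> \<le> K * (norm (\<gamma> b' - \<gamma> t0))^2" using Gq[OF t0(1) b'(2) \<nu>(2) \<nu>(1)] .
      then show ?thesis using b' b(2) t0(2) by (simp add: dist_norm)
    qed
    have tang: "\<mu> \<bullet> \<gamma>1 t0 = 0" if tl: "tanlim \<Omega> p \<mu>" for \<mu>
    proof (rule ccontr)
      define c where "c = \<mu> \<bullet> \<gamma>1 t0"
      assume "\<mu> \<bullet> \<gamma>1 t0 \<noteq> 0"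
      then have c0: "\<bar>c\<bar> > 0" by (simp add: c_def)
      define C1 where "C1 = norm (\<gamma>1 t0) + 3 * M2"
      have C1: "C1 > 0" using M2pos by (simp add: C1_def add_nonneg_pos)
      define y where "y = (\<lambda>h. \<gamma> (t0 + h))"
      have hI: "t0 + h \<in> I0" "t0 \<in> I0" if "0 < h" "h \<le> \<eta>" for h
        using inI0[OF t0(1), of "t0 + h"] that by auto
      have yne: "y h \<noteq> p" if h: "0 < h" "h \<le> \<eta>" for h
      proof -
        have "m / 2 * \<bar>(t0 + h) - t0\<bar> \<le> norm (\<gamma> (t0 + h) - \<gamma> t0)"
          using Glow[OF t0(1), of "t0 + h"] h by simp
        moreover have "m / 2 * \<bar>(t0 + h) - t0\<bar> > 0" using m0 h by simp
        ultimately show ?thesis unfolding y_def t0(2) by auto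
      qed
      have ynorm: "norm (y h - p) \<le> C1 * h" if h: "0 < h" "h \<le> \<eta>" for h
      proof -
        have e: "norm (y h - p - h *\<^sub>R \<gamma>1 t0) \<le> 3 * M2 * h^2"
          using G1[OF hI(2)[OF h] hI(1)[OF h]] unfolding y_def t0(2) by simp
        have "h^2 \<le> h" using h \<eta>(2) by (simp add: power2_eq_square mult_le_cancel_left1)
        then have e2: "3 * M2 * h^2 \<le> 3 * M2 * h" using M2pos by (intro mult_left_mono) auto
        have "norm (y h - p) \<le> norm (h *\<^sub>R \<gamma>1 t0) + norm (y h - p - h *\<^sub>R \<gamma>1 t0)"
          by (rule norm_triangle_sub)
        also have "norm (h *\<^sub>R \<gamma>1 t0) = h * norm (\<gamma>1 t0)" using h by simp
        finally have "norm (y h - p) \<le> h * norm (\<gamma>1 t0) + 3 * M2 * h" using e e2 by linarith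
        then show ?thesis by (simp add: C1_def algebra_simps)
      qed
      have yinner: "\<bar>(y h - p) \<bullet> \<mu> - h * c\<bar> \<le> norm \<mu> * (3 * M2 * h^2)" if h: "0 < h" "h \<le> \<eta>" for h
      proof -
        have e: "norm (y h - p - h *\<^sub>R \<gamma>1 t0) \<le> 3 * M2 * h^2"
          using G1[OF hI(2)[OF h] hI(1)[OF h]] unfolding y_def t0(2) by simp
        have "(y h - p) \<bullet> \<mu> - h * c = (y h - p - h *\<^sub>R \<gamma>1 t0) \<bullet> \<mu>"
          by (simp add: c_def inner_diff_left inner_diff_right inner_scaleR_right inner_commute)
        then have "\<bar>(y h - p) \<bullet> \<mu> - h * c\<bar> \<le> norm (y h - p - h *\<^sub>R \<gamma>1 t0) * norm \<mu>"
          using Cauchy_Schwarz_ineq2 by metis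
        also have "\<dots> \<le> 3 * M2 * h^2 * norm \<mu>" using e by (intro mult_right_mono) auto
        finally show ?thesis by (simp add: mult.commute)
      qed
      have lim_y: "(y \<longlongrightarrow> p) (at_right 0)"
      proof -
        have "isCont \<gamma> t0" using c\<gamma> by (simp add: continuous_on_eq_continuous_at)
        then have "(\<gamma> \<longlongrightarrow> \<gamma> t0) (at t0)" by (simp add: isCont_def)
        then have "((\<lambda>h. \<gamma> (t0 + h)) \<longlongrightarrow> \<gamma> t0) (at 0)" by (rule LIM_offset_zero)
        then have "((\<lambda>h. \<gamma> (t0 + h)) \<longlongrightarrow> \<gamma> t0) (at_right 0)"
          by (rule tendsto_mono[rotated]) (simp add: at_le)
        then show ?thesis unfolding y_def t0(2) .
      qed
      have ev_in: "eventually (\<lambda>h. y h \<in> frontier \<Omega> - {p}) (at_right 0)"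
        unfolding eventually_at_right_field
      proof (intro exI[of _ \<eta>] conjI allI impI)
        show "0 < \<eta>" by (rule \<eta>(1))
        fix h :: real assume "0 < h" "h < \<eta>"
        then show "y h \<in> frontier \<Omega> - {p}" using yne[of h] inF unfolding y_def by auto
      qed
      have flt: "filterlim y (at p within frontier \<Omega>) (at_right 0)"
        by (rule filterlim_at_withinI[OF lim_y ev_in])
      have comp: "((\<lambda>h. ((y h - p) \<bullet> \<mu>) / norm (y h - p)) \<longlongrightarrow> 0) (at_right 0)"
        using filterlim_compose[OF tl[unfolded tanlim_def] flt] .
      have ev1: "eventually (\<lambda>h. dist (((y h - p) \<bullet> \<mu>) / norm (y h - p)) 0 < \<bar>c\<bar> / (4 * C1)) (at_right 0)"
        using tendstoD[OF comp] c0 C1 by simp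
      obtain b1 where b1: "b1 > 0" "\<And>h. 0 < h \<Longrightarrow> h < b1 \<Longrightarrow>
           dist (((y h - p) \<bullet> \<mu>) / norm (y h - p)) 0 < \<bar>c\<bar> / (4 * C1)"
        using ev1 unfolding eventually_at_right_field by auto
      define h where "h = min (b1 / 2) (min \<eta> (\<bar>c\<bar> / (12 * M2 * (norm \<mu> + 1))))"
      have p1: "0 < 12 * M2 * (norm \<mu> + 1)" using M2pos by (intro mult_pos_pos) (auto intro: add_nonneg_pos)
      have "0 < \<bar>c\<bar> / (12 * M2 * (norm \<mu> + 1))" using c0 p1 by (rule divide_pos_pos)
      then have h0: "0 < h" using b1(1) \<eta>(1) by (simp add: h_def)
      have hb1: "h < b1" using b1(1) by (simp add: h_def)
      have h\<eta>: "h \<le> \<eta>" by (simp add: h_def)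
      have hc: "h \<le> \<bar>c\<bar> / (12 * M2 * (norm \<mu> + 1))" by (simp add: h_def)
      have hc2: "norm \<mu> * (3 * M2 * h^2) \<le> \<bar>c\<bar> / 4 * h"
      proof -
        have hle: "h * (12 * M2 * (norm \<mu> + 1)) \<le> \<bar>c\<bar>" using hc p1 by (simp add: pos_le_divide_eq)
        have q1: "norm \<mu> * (3 * M2 * h^2) \<le> (norm \<mu> + 1) * (3 * M2 * h^2)"
          by (intro mult_right_mono) (use M2pos in auto)
        have q2: "(norm \<mu> + 1) * (3 * M2 * h^2) = (h * (12 * M2 * (norm \<mu> + 1))) / 4 * h"
          by (simp add: power2_eq_square algebra_simps)
        have q3: "(h * (12 * M2 * (norm \<mu> + 1))) / 4 * h \<le> \<bar>c\<bar> / 4 * h"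
          using hle h0 by (intro mult_right_mono divide_right_mono) auto
        show ?thesis using q1 q2 q3 by linarith
      qed
      define N where "N = norm (y h - p)"
      define A where "A = (y h - p) \<bullet> \<mu>"
      have N0: "N > 0" using yne[OF h0 h\<eta>] by (simp add: N_def)
      have NC: "N \<le> C1 * h" using ynorm[OF h0 h\<eta>] by (simp add: N_def)
      have "\<bar>A / N\<bar> < \<bar>c\<bar> / (4 * C1)" using b1(2)[OF h0 hb1] by (simp add: A_def N_def)
      then have "\<bar>A\<bar> < \<bar>c\<bar> / (4 * C1) * N" using N0 by (simp add: abs_divide pos_divide_less_eq)
      also have "\<dots> \<le> \<bar>c\<bar> / (4 * C1) * (C1 * h)" using NC c0 C1 by (intro mult_left_mono) auto
      also have "\<dots> = \<bar>c\<bar> / 4 * h" using C1 by (simp add: field_simps)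
      finally have a1: "\<bar>A\<bar> < \<bar>c\<bar> / 4 * h" .
      have a2: "\<bar>A - h * c\<bar> \<le> \<bar>c\<bar> / 4 * h" using yinner[OF h0 h\<eta>] hc2 by (simp add: A_def)
      have "\<bar>h * c\<bar> = h * \<bar>c\<bar>" using h0 by (simp add: abs_mult)
      then have "h * \<bar>c\<bar> \<le> \<bar>A\<bar> + \<bar>A - h * c\<bar>" by linarith
      moreover have "\<bar>c\<bar> / 4 * h = (h * \<bar>c\<bar>) / 4" by simp
      moreover have "0 < h * \<bar>c\<bar>" using h0 c0 by simp
      ultimately show False using a1 a2 by linarith
    qed
    show ?thesis using nz[of t0] quad tang by blast
  qed
  show ?thesis using r0 Kpos main by blast
qed

lemma frontier_notin_open:
  fixes \<Omega> :: "'a::real_normed_vector set"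
  shows "open \<Omega> \<Longrightarrow> p \<in> frontier \<Omega> \<Longrightarrow> p \<notin> \<Omega>"
  by (simp add: frontier_def interior_open)

lemma ray_lemma:
  fixes \<Omega> :: "(real^2) set"
  assumes op: "open \<Omega>" and p: "p \<in> frontier \<Omega>" and \<nu>: "norm \<nu> = 1" and K: "K > 0"
    and quad: "\<And>q. q \<in> frontier \<Omega> \<Longrightarrow> dist q p < r0 \<Longrightarrow> \<bar>(q - p) \<bullet> \<nu>\<bar> \<le> K * (dist q p)^2"
    and e0: "\<epsilon>0 > 0" and ray: "\<And>t. 0 < t \<Longrightarrow> t < \<epsilon>0 \<Longrightarrow> p - t *\<^sub>R \<nu> \<in> \<Omega>"
    and T: "0 < T" "T < r0" "T < 1 / K"
  shows "p - T *\<^sub>R \<nu> \<in> \<Omega>"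
proof (rule ccontr)
  assume nT: "p - T *\<^sub>R \<nu> \<notin> \<Omega>"
  define \<epsilon> where "\<epsilon> = min \<epsilon>0 T / 2"
  have \<epsilon>: "0 < \<epsilon>" "\<epsilon> < \<epsilon>0" "\<epsilon> \<le> T" using e0 T by (auto simp: \<epsilon>_def)
  have a: "p - \<epsilon> *\<^sub>R \<nu> \<in> \<Omega>" using ray \<epsilon> by blast
  define S where "S = closed_segment (p - \<epsilon> *\<^sub>R \<nu>) (p - T *\<^sub>R \<nu>)"
  have "S \<inter> frontier \<Omega> \<noteq> {}"
  proof (rule connected_Int_frontier)
    show "connected S" unfolding S_def by simp
    show "S \<inter> \<Omega> \<noteq> {}" using a unfolding S_def by auto
    show "S - \<Omega> \<noteq> {}" using nT unfolding S_def by auto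
  qed
  then obtain q where qS: "q \<in> S" and qF: "q \<in> frontier \<Omega>" by blast
  obtain u where u: "0 \<le> u" "u \<le> 1" "q = (1 - u) *\<^sub>R (p - \<epsilon> *\<^sub>R \<nu>) + u *\<^sub>R (p - T *\<^sub>R \<nu>)"
    using qS unfolding S_def in_segment(1) by blast
  define t where "t = (1 - u) * \<epsilon> + u * T"
  have qt: "q = p - t *\<^sub>R \<nu>" unfolding u(3) t_def by (simp add: algebra_simps)
  have t1: "\<epsilon> \<le> t"
  proof -
    have "(1 - u) * \<epsilon> + u * \<epsilon> \<le> (1 - u) * \<epsilon> + u * T" using u \<epsilon>(3) by (simp add: mult_left_mono)
    then show ?thesis by (simp add: t_def algebra_simps)
  qed
  have t2: "t \<le> T"
  proof -
    have "(1 - u) * \<epsilon> + u * T \<le> (1 - u) * T + u * T" using u \<epsilon>(3) by (simp add: mult_left_mono)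
    then show ?thesis by (simp add: t_def algebra_simps)
  qed
  have t0: "t > 0" using t1 \<epsilon>(1) by linarith
  have dq: "dist q p = t" using qt \<nu> t0 by (simp add: dist_norm)
  have iq: "(q - p) \<bullet> \<nu> = - t" using qt \<nu> by (simp add: inner_commute power2_norm_eq_inner[symmetric])
  have "t \<le> K * t^2" using quad[OF qF] dq iq t2 T(2) by simp
  then have "1 \<le> K * t" using t0 by (simp add: power2_eq_square)
  then have "1 / K \<le> t" using K by (simp add: divide_le_eq mult.commute)
  then show False using t2 T(3) by linarith
qed

lemma deep_lemma:
  fixes \<Omega> :: "(real^2) set"
  assumes op: "open \<Omega>" and p: "p \<in> frontier \<Omega>" and \<nu>: "norm \<nu> = 1" and K: "K > 0"
    and quad: "\<And>q. q \<in> frontier \<Omega> \<Longrightarrow> dist q p < r0 \<Longrightarrow> \<bar>(q - p) \<bullet> \<nu>\<bar> \<le> K * (dist q p)^2"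
    and e0: "\<epsilon>0 > 0" and ray: "\<And>t. 0 < t \<Longrightarrow> t < \<epsilon>0 \<Longrightarrow> p - t *\<^sub>R \<nu> \<in> \<Omega>"
    and \<delta>: "0 < \<delta>" "2 * \<delta> < r0" "2 * \<delta> < 1 / K"
    and x: "dist x p \<le> \<delta>" and y: "y \<notin> \<Omega>" "dist y x \<le> \<delta>"
  shows "(y - p) \<bullet> \<nu> \<ge> - (4 * K * \<delta>^2)"
proof (cases "(y - p) \<bullet> \<nu> \<ge> 0")
  case True
  have "0 \<le> 4 * K * \<delta>^2" using K by simp
  then show ?thesis using True by linarith
next
  case False
  define h where "h = (y - p) \<bullet> \<nu>"
  have hneg: "h < 0" using False by (simp add: h_def)
  have x2: "p - (2 * \<delta>) *\<^sub>R \<nu> \<in> \<Omega>"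
    by (rule ray_lemma[OF op p \<nu> K quad e0 ray]) (use \<delta> in auto)
  have nyp: "norm (y - p) \<le> 2 * \<delta>"
  proof -
    have "norm (y - p) \<le> norm (y - x) + norm (x - p)" by (rule norm_diff_triangle_ineq[of y x x p, simplified])
    then show ?thesis using x y(2) by (simp add: dist_norm)
  qed
  have hge: "- (2 * \<delta>) \<le> h"
  proof -
    have "\<bar>h\<bar> \<le> norm (y - p) * norm \<nu>" unfolding h_def by (rule Cauchy_Schwarz_ineq2)
    then have "\<bar>h\<bar> \<le> norm (y - p)" using \<nu> by simp
    then show ?thesis using nyp by linarith
  qed
  define S where "S = closed_segment (p - (2 * \<delta>) *\<^sub>R \<nu>) y"
  have "S \<inter> frontier \<Omega> \<noteq> {}"
  proof (rule connected_Int_frontier)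
    show "connected S" unfolding S_def by simp
    show "S \<inter> \<Omega> \<noteq> {}" using x2 unfolding S_def by auto
    show "S - \<Omega> \<noteq> {}" using y(1) unfolding S_def by auto
  qed
  then obtain q where qS: "q \<in> S" and qF: "q \<in> frontier \<Omega>" by blast
  obtain u where u: "0 \<le> u" "u \<le> 1" "q = (1 - u) *\<^sub>R (p - (2 * \<delta>) *\<^sub>R \<nu>) + u *\<^sub>R y"
    using qS unfolding S_def in_segment(1) by blast
  have qp: "q - p = (1 - u) *\<^sub>R (- ((2 * \<delta>) *\<^sub>R \<nu>)) + u *\<^sub>R (y - p)"
    unfolding u(3) by (simp add: algebra_simps)
  have nqp: "norm (q - p) \<le> 2 * \<delta>"
  proof -
    have "norm (q - p) \<le> norm ((1 - u) *\<^sub>R (- ((2 * \<delta>) *\<^sub>R \<nu>))) + norm (u *\<^sub>R (y - p))"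
      unfolding qp by (rule norm_triangle_ineq)
    also have "\<dots> = (1 - u) * (2 * \<delta>) + u * norm (y - p)" using u(1,2) \<nu> \<delta>(1) by simp
    also have "\<dots> \<le> (1 - u) * (2 * \<delta>) + u * (2 * \<delta>)" using u(1) nyp by (simp add: mult_left_mono)
    also have "\<dots> = 2 * \<delta>" by (simp add: algebra_simps)
    finally show ?thesis .
  qed
  have iqp: "(q - p) \<bullet> \<nu> = (1 - u) * (- (2 * \<delta>)) + u * h"
  proof -
    have nn: "\<nu> \<bullet> \<nu> = 1" using \<nu> by (simp add: norm_eq_1)
    show ?thesis unfolding qp h_def
      by (simp add: inner_add_left inner_diff_left inner_scaleR_left nn)
  qed
  have "(1 - u) * (- (2 * \<delta>)) \<le> (1 - u) * h" using u(2) hge by (intro mult_left_mono) auto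
  then have le_h: "(q - p) \<bullet> \<nu> \<le> h" unfolding iqp by (simp add: algebra_simps)
  have "dist q p < r0" using nqp \<delta>(2) by (simp add: dist_norm)
  then have "\<bar>(q - p) \<bullet> \<nu>\<bar> \<le> K * (dist q p)^2" using quad[OF qF] by blast
  also have "\<dots> \<le> K * (2 * \<delta>)^2"
    using nqp K by (intro mult_left_mono power_mono) (auto simp: dist_norm)
  finally have "\<bar>(q - p) \<bullet> \<nu>\<bar> \<le> 4 * K * \<delta>^2" by (simp add: power_mult_distrib)
  then show ?thesis using le_h hneg unfolding h_def by linarith
qed

lemma normal_lemma:
  fixes \<Omega> :: "(real^2) set" and x p v :: "real^2"
  assumes op: "open \<Omega>" and cv: "convex \<Omega>" and x: "x \<in> \<Omega>" and p: "p \<in> frontier \<Omega>"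
    and d: "0 < dist x p" and ball: "ball x (dist x p) \<subseteq> \<Omega>"
    and v: "v \<noteq> 0" and tp: "\<And>\<mu>. tanlim \<Omega> p \<mu> \<Longrightarrow> \<mu> \<bullet> v = 0"
  shows "ext_normal \<Omega> p = (p - x) /\<^sub>R dist x p"
    and "\<And>z. z \<in> \<Omega> \<Longrightarrow> (z - p) \<bullet> ((p - x) /\<^sub>R dist x p) < 0"
    and "((p - x) /\<^sub>R dist x p) \<bullet> v = 0"
    and "norm ((p - x) /\<^sub>R dist x p) = 1"
proof -
  define dd where "dd = dist x p"
  define \<nu> where "\<nu> = (p - x) /\<^sub>R dd"
  have dd: "dd > 0" using d by (simp add: dd_def)
  have n1: "norm \<nu> = 1" using dd unfolding \<nu>_def dd_def by (simp add: dist_norm norm_minus_commute)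
  have nn: "\<nu> \<bullet> \<nu> = 1" using n1 by (simp add: norm_eq_1)
  have px: "p - x = dd *\<^sub>R \<nu>" using dd unfolding \<nu>_def by simp
  have pO: "p \<notin> \<Omega>" using frontier_notin_open[OF op p] .
  obtain a where a: "a \<noteq> 0" "\<forall>z\<in>(\<lambda>z. z - p) ` \<Omega>. 0 \<le> a \<bullet> z"
    using separating_hyperplane_set_0[of "(\<lambda>z. z - p) ` \<Omega>"] convex_translation_subtract[OF cv, of p] pO
    by force
  define w where "w = - a"
  have w0: "w \<noteq> 0" using a(1) by (simp add: w_def)
  have wle: "w \<bullet> (z - p) \<le> 0" if "z \<in> \<Omega>" for z using a(2) that by (auto simp: w_def)
  have nw: "norm w > 0" using w0 by simp
  have wnu: "w \<bullet> \<nu> = norm w"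
  proof (rule ccontr)
    assume ne: "w \<bullet> \<nu> \<noteq> norm w"
    have "w \<bullet> \<nu> \<le> norm w * norm \<nu>" by (rule norm_cauchy_schwarz)
    then have lt: "w \<bullet> \<nu> < norm w" using ne n1 by simp
    have ge: "- norm w \<le> w \<bullet> \<nu>"
    proof -
      have "\<bar>w \<bullet> \<nu>\<bar> \<le> norm w * norm \<nu>" by (rule Cauchy_Schwarz_ineq2)
      then show ?thesis using n1 by simp
    qed
    define s where "s = (w \<bullet> \<nu>) / norm w"
    have s: "-1 \<le> s" "s < 1" using lt ge nw by (auto simp: s_def field_simps)
    define t where "t = dd * (1 + s) / 2"
    have s1: "0 \<le> 1 + s" "1 + s < 2" using s by linarith+
    have t: "0 \<le> t" "t < dd"
    proof -
      show "0 \<le> t" using s1 dd by (simp add: t_def)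
      have "dd * (1 + s) < dd * 2" using s1 dd by (intro mult_strict_left_mono) auto
      then show "t < dd" by (simp add: t_def)
    qed
    define z where "z = x + t *\<^sub>R (w /\<^sub>R norm w)"
    have "dist x z = t" using t nw by (simp add: z_def dist_norm)
    then have "z \<in> ball x dd" using t by simp
    then have zO: "z \<in> \<Omega>" using ball unfolding dd_def by blast
    have "w \<bullet> (z - p) = w \<bullet> (x - p) + t * norm w"
      using nw by (simp add: z_def inner_add_right inner_diff_right algebra_simps power2_norm_eq_inner[symmetric] power2_eq_square)
    also have "w \<bullet> (x - p) = - dd * (w \<bullet> \<nu>)"
    proof -
      have "x - p = - (dd *\<^sub>R \<nu>)" using px by (simp add: algebra_simps)
      then show ?thesis by simp
    qed
    also have "- dd * (w \<bullet> \<nu>) + t * norm w = norm w * (dd * (1 - s) / 2)"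
      using nw by (simp add: t_def s_def field_simps)
    finally have "w \<bullet> (z - p) = norm w * (dd * (1 - s) / 2)" .
    moreover have "norm w * (dd * (1 - s) / 2) > 0" using nw dd s by simp
    ultimately show False using wle[OF zO] by simp
  qed
  have weq: "w = norm w *\<^sub>R \<nu>"
  proof -
    define c where "c = norm w"
    have e: "(w - c *\<^sub>R \<nu>) \<bullet> (w - c *\<^sub>R \<nu>) = w \<bullet> w - c * (w \<bullet> \<nu>) - c * (\<nu> \<bullet> w) + c * c * (\<nu> \<bullet> \<nu>)"
      unfolding inner_diff_left inner_diff_right inner_scaleR_left inner_scaleR_right by (simp add: algebra_simps)
    have ww: "w \<bullet> w = c * c" unfolding c_def by (simp add: dot_square_norm power2_eq_square)
    have wn: "\<nu> \<bullet> w = c" using wnu by (simp add: c_def inner_commute)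
    have "(w - c *\<^sub>R \<nu>) \<bullet> (w - c *\<^sub>R \<nu>) = 0" unfolding e ww wn nn using wnu by (simp add: c_def)
    then have "w - c *\<^sub>R \<nu> = 0" by simp
    then show ?thesis by (simp add: c_def)
  qed
  have le0: "(z - p) \<bullet> \<nu> \<le> 0" if "z \<in> \<Omega>" for z
  proof -
    have "w \<bullet> (z - p) = norm w * ((z - p) \<bullet> \<nu>)"
      by (subst weq) (simp add: inner_commute)
    then show ?thesis using wle[OF that] nw by (simp add: mult_le_0_iff)
  qed
  have lt0: "(z - p) \<bullet> \<nu> < 0" if z: "z \<in> \<Omega>" for z
  proof -
    obtain e where e: "e > 0" "ball z e \<subseteq> \<Omega>" using op z open_contains_ball by blast
    have "z + (e / 2) *\<^sub>R \<nu> \<in> ball z e" using e n1 by (simp add: dist_norm)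
    then have "(z + (e / 2) *\<^sub>R \<nu> - p) \<bullet> \<nu> \<le> 0" using le0 e(2) by blast
    then have "(z - p) \<bullet> \<nu> + e / 2 \<le> 0" using nn by (simp add: inner_add_left inner_diff_left algebra_simps)
    then show ?thesis using e(1) by linarith
  qed
  have clo: "(z - p) \<bullet> \<nu> \<le> 0" if "z \<in> closure \<Omega>" for z
  proof -
    have "closure \<Omega> \<subseteq> {z. (z - p) \<bullet> \<nu> \<le> 0}"
    proof (rule closure_minimal)
      show "\<Omega> \<subseteq> {z. (z - p) \<bullet> \<nu> \<le> 0}" using le0 by blast
      show "closed {z. (z - p) \<bullet> \<nu> \<le> 0}" by (intro closed_Collect_le continuous_intros)
    qed
    then show ?thesis using that by blast
  qed
  have fr_out: "dd \<le> dist x y" if "y \<in> frontier \<Omega>" for y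
  proof (rule ccontr)
    assume "\<not> dd \<le> dist x y"
    then have "y \<in> ball x dd" by simp
    then have "y \<in> \<Omega>" using ball unfolding dd_def by blast
    then show False using frontier_notin_open[OF op that] by simp
  qed
  have ext: "is_ext_unit_normal \<Omega> p \<nu>"
    unfolding is_ext_unit_normal_def
  proof (intro conjI)
    show "norm \<nu> = 1" by (rule n1)
    show "((\<lambda>y. ((y - p) \<bullet> \<nu>) / norm (y - p)) \<longlongrightarrow> 0) (at p within frontier \<Omega>)"
    proof (rule Lim_null_comparison)
      show "((\<lambda>y. norm (y - p) / (2 * dd)) \<longlongrightarrow> 0) (at p within frontier \<Omega>)"
      proof -
        have "((\<lambda>y. norm (y - p) / (2 * dd)) \<longlongrightarrow> norm (p - p) / (2 * dd)) (at p within frontier \<Omega>)"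
          using dd by (intro tendsto_intros) auto
        then show ?thesis by simp
      qed
      show "\<forall>\<^sub>F y in at p within frontier \<Omega>. norm (((y - p) \<bullet> \<nu>) / norm (y - p)) \<le> norm (y - p) / (2 * dd)"
        unfolding eventually_at_filter
      proof (rule always_eventually, intro allI impI)
        fix y assume yp: "y \<noteq> p" and yF: "y \<in> frontier \<Omega>"
        have up: "(y - p) \<bullet> \<nu> \<le> 0" using clo yF by (simp add: frontier_def)
        have "dd^2 \<le> (dist x y)^2" using fr_out[OF yF] dd by (intro power_mono) auto
        also have "(dist x y)^2 = (norm ((y - p) + dd *\<^sub>R \<nu>))^2"
          using px by (simp add: dist_norm norm_minus_commute algebra_simps)
        also have "\<dots> = ((y - p) + dd *\<^sub>R \<nu>) \<bullet> ((y - p) + dd *\<^sub>R \<nu>)" by (rule power2_norm_eq_inner)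
        also have "\<dots> = (y - p) \<bullet> (y - p) + 2 * dd * ((y - p) \<bullet> \<nu>) + dd * dd * (\<nu> \<bullet> \<nu>)"
          unfolding inner_add_left inner_add_right inner_scaleR_left inner_scaleR_right
          by (simp add: inner_commute algebra_simps)
        also have "\<dots> = (norm (y - p))^2 + 2 * dd * ((y - p) \<bullet> \<nu>) + dd^2"
          using nn by (simp add: dot_square_norm power2_eq_square)
        finally have lo: "- ((norm (y - p))^2) \<le> 2 * dd * ((y - p) \<bullet> \<nu>)" by simp
        have npos: "norm (y - p) > 0" using yp by simp
        have "\<bar>(y - p) \<bullet> \<nu>\<bar> \<le> (norm (y - p))^2 / (2 * dd)"
          using lo up dd by (simp add: abs_if field_simps)
        then have "\<bar>(y - p) \<bullet> \<nu>\<bar> / norm (y - p) \<le> (norm (y - p))^2 / (2 * dd) / norm (y - p)"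
          using npos by (intro divide_right_mono) auto
        also have "\<dots> = norm (y - p) / (2 * dd)" using npos by (simp add: power2_eq_square field_simps)
        finally show "norm (((y - p) \<bullet> \<nu>) / norm (y - p)) \<le> norm (y - p) / (2 * dd)"
          by (simp add: abs_divide)
      qed
    qed
    show "\<forall>\<^sub>F t in at_right 0. p + t *\<^sub>R \<nu> \<notin> closure \<Omega>"
      unfolding eventually_at_right_field
    proof (intro exI[of _ 1] conjI allI impI)
      fix t :: real assume t: "0 < t" "t < 1"
      show "p + t *\<^sub>R \<nu> \<notin> closure \<Omega>"
      proof
        assume "p + t *\<^sub>R \<nu> \<in> closure \<Omega>"
        then have "(p + t *\<^sub>R \<nu> - p) \<bullet> \<nu> \<le> 0" by (rule clo)
        then show False using t nn by simp
      qed
    qed simp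
  qed
  have tl: "tanlim \<Omega> p \<mu>" if "is_ext_unit_normal \<Omega> p \<mu>" for \<mu>
    using that unfolding is_ext_unit_normal_def tanlim_def by blast
  have nuv: "\<nu> \<bullet> v = 0" using tp[OF tl[OF ext]] .
  have uniq: "\<mu> = \<nu>" if mu: "is_ext_unit_normal \<Omega> p \<mu>" for \<mu>
  proof -
    have m1: "norm \<mu> = 1" using mu unfolding is_ext_unit_normal_def by blast
    have "\<mu> \<bullet> v = 0" using tp[OF tl[OF mu]] .
    then have alt: "\<mu> = \<nu> \<or> \<mu> = - \<nu>" using two_perp[OF v _ nuv m1 n1] by blast
    show ?thesis
    proof (rule ccontr)
      assume "\<mu> \<noteq> \<nu>"
      then have mneg: "\<mu> = - \<nu>" using alt by blast
      have "\<forall>\<^sub>F t in at_right 0. p + t *\<^sub>R \<mu> \<notin> closure \<Omega>"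
        using mu unfolding is_ext_unit_normal_def by blast
      then obtain b where b: "b > 0" "\<And>t. 0 < t \<Longrightarrow> t < b \<Longrightarrow> p + t *\<^sub>R \<mu> \<notin> closure \<Omega>"
        unfolding eventually_at_right_field by auto
      define t where "t = min b dd / 2"
      have t: "0 < t" "t < b" "t < dd" using b(1) dd by (auto simp: t_def)
      have "p + t *\<^sub>R \<mu> = x + (dd - t) *\<^sub>R \<nu>" using px mneg by (simp add: algebra_simps)
      moreover have "dist x (x + (dd - t) *\<^sub>R \<nu>) < dd" using t n1 by (simp add: dist_norm)
      ultimately have "p + t *\<^sub>R \<mu> \<in> \<Omega>" using ball by (simp add: dd_def subset_eq)
      then have "p + t *\<^sub>R \<mu> \<in> closure \<Omega>" using closure_subset by blast
      then show False using b(2)[OF t(1) t(2)] by blast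
    qed
  qed
  have "ext_normal \<Omega> p = \<nu>"
    unfolding ext_normal_def using ext uniq by (rule the_equality)
  then show "ext_normal \<Omega> p = (p - x) /\<^sub>R dist x p" by (simp add: \<nu>_def dd_def)
  show "\<And>z. z \<in> \<Omega> \<Longrightarrow> (z - p) \<bullet> ((p - x) /\<^sub>R dist x p) < 0" using lt0 by (simp add: \<nu>_def dd_def)
  show "((p - x) /\<^sub>R dist x p) \<bullet> v = 0" using nuv by (simp add: \<nu>_def dd_def)
  show "norm ((p - x) /\<^sub>R dist x p) = 1" using n1 by (simp add: \<nu>_def dd_def)
qed

lemma norm2_sq: "(norm (w::real^2))^2 = (w$1)^2 + (w$2)^2"
proof -
  have "(norm w)^2 = w \<bullet> w" by (rule power2_norm_eq_inner)
  also have "\<dots> = (w$1)^2 + (w$2)^2" by (simp add: inner_vec_def sum_2 power2_eq_square)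
  finally show ?thesis .
qed

lemma orth2I:
  fixes g :: "real^2 \<Rightarrow> real^2"
  assumes "linear g" "\<And>w. ((g w)$1)^2 + ((g w)$2)^2 = (w$1)^2 + (w$2)^2"
  shows "orthogonal_transformation g"
proof -
  have "norm (g v) = norm v" for v
  proof -
    have "(norm (g v))^2 = (norm v)^2" using assms(2)[of v] by (simp add: norm2_sq)
    then show ?thesis by simp
  qed
  then show ?thesis using assms(1) by (simp add: orthogonal_transformation)
qed

lemma cov_orth:
  fixes f :: "real^2 \<Rightarrow> real" and g :: "real^2 \<Rightarrow> real^2"
  assumes g: "orthogonal_transformation g" and f: "f absolutely_integrable_on UNIV"
  shows "(\<lambda>w. f (c + g w)) absolutely_integrable_on UNIV"
    and "integral UNIV (\<lambda>w. f (c + g w)) = integral UNIV f"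
proof -
  have lin: "linear g" using g by (simp add: orthogonal_transformation_linear)
  have bij: "bij g" using g by (rule orthogonal_transformation_bij)
  have "orthogonal_matrix (matrix g)" using g by (simp add: orthogonal_transformation_matrix)
  then have "\<bar>det (matrix g)\<bar> = 1" using det_orthogonal_matrix by fastforce
  then show "(\<lambda>w. f (c + g w)) absolutely_integrable_on UNIV"
    and "integral UNIV (\<lambda>w. f (c + g w)) = integral UNIV f"
    using cov_lin[OF lin bij f, of c] by simp_all
qed

context
  fixes J :: "real \<Rightarrow> real"
  assumes adm: "admissible_kernel J"
begin

lemma adm_nn: "r \<ge> 0 \<Longrightarrow> 0 \<le> J r" using adm unfolding admissible_kernel_def by blast
lemma adm_le0: "r \<ge> 0 \<Longrightarrow> J r \<le> J 0" using adm unfolding admissible_kernel_def by blast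
lemma adm_zero: "r > 1 \<Longrightarrow> J r = 0" using adm unfolding admissible_kernel_def by blast
lemma adm_J0: "J 0 > 0" using adm unfolding admissible_kernel_def by simp
lemma adm_int: "((\<lambda>z::real^2. J (norm z) * (norm z)^2) has_integral 2) UNIV"
  using adm unfolding admissible_kernel_def by blast

lemma adm_meas:
  assumes d: "\<delta> > 0"
  shows "(\<lambda>z::real^2. J (norm z / \<delta>)) \<in> borel_measurable borel"
proof -
  define J' where "J' = (\<lambda>r. J (max 0 r))"
  have "mono (\<lambda>r. - J' r)"
  proof (rule monoI)
    fix r s :: real assume "r \<le> s"
    then have "J (max 0 s) \<le> J (max 0 r)" using adm unfolding admissible_kernel_def
      by (metis max.cobounded1 max.mono order_refl)
    then show "- J' r \<le> - J' s" by (simp add: J'_def)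
  qed
  then have "(\<lambda>r. - J' r) \<in> borel_measurable borel" by (rule borel_measurable_mono)
  then have "(\<lambda>r. - (- J' r)) \<in> borel_measurable borel" by (rule borel_measurable_uminus)
  then have mJ: "J' \<in> borel_measurable borel" by simp
  have mn: "(\<lambda>z::real^2. norm z / \<delta>) \<in> borel_measurable borel" by measurable
  have "(\<lambda>z::real^2. J' (norm z / \<delta>)) \<in> borel_measurable borel"
    using measurable_compose[OF mn mJ] by (simp add: o_def)
  moreover have "(\<lambda>z::real^2. J' (norm z / \<delta>)) = (\<lambda>z. J (norm z / \<delta>))"
    using d by (simp add: J'_def max_def)
  ultimately show ?thesis by simp
qed

lemma phi_meas:
  assumes d: "\<delta> > 0"
  shows "(\<lambda>z::real^2. J_delta J \<delta> (norm z)) \<in> borel_measurable borel"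
proof -
  have "(\<lambda>z::real^2. J (norm z / \<delta>) / \<delta> ^ 4) \<in> borel_measurable borel"
    using adm_meas[OF d] by (rule borel_measurable_divide) simp
  then show ?thesis by (simp add: J_delta_def)
qed

lemma phi_nn: "\<delta> > 0 \<Longrightarrow> 0 \<le> J_delta J \<delta> (norm (z::real^2))"
  unfolding J_delta_def by (intro divide_nonneg_pos adm_nn) auto

lemma phi_le: "\<delta> > 0 \<Longrightarrow> J_delta J \<delta> (norm (z::real^2)) \<le> J 0 / \<delta> ^ 4"
  unfolding J_delta_def by (intro divide_right_mono adm_le0) auto

lemma phi_zero: "\<delta> > 0 \<Longrightarrow> norm (z::real^2) > \<delta> \<Longrightarrow> J_delta J \<delta> (norm z) = 0"
  unfolding J_delta_def by (simp add: adm_zero)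

lemma phi_times_int:
  assumes d: "\<delta> > 0" and h: "h \<in> borel_measurable lebesgue"
    and hb: "\<And>w. norm (w::real^2) \<le> \<delta> \<Longrightarrow> \<bar>h w\<bar> \<le> C"
  shows "(\<lambda>w. J_delta J \<delta> (norm w) * h w) absolutely_integrable_on UNIV"
proof (rule bcs_abs_integrable)
  show "(\<lambda>w. J_delta J \<delta> (norm w) * h w) \<in> borel_measurable lebesgue"
    using borel_to_leb[OF phi_meas[OF d]] h by (rule borel_measurable_times)
  have C0: "0 \<le> C" using hb[of 0] d by fastforce
  show "\<bar>J_delta J \<delta> (norm w) * h w\<bar> \<le> (J 0 / \<delta> ^ 4 * C) * indicator (cball 0 \<delta>) w" for w
  proof (cases "norm w \<le> \<delta>")
    case True
    have "\<bar>J_delta J \<delta> (norm w) * h w\<bar> = J_delta J \<delta> (norm w) * \<bar>h w\<bar>"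
      using phi_nn[OF d] by (simp add: abs_mult)
    also have "\<dots> \<le> J 0 / \<delta> ^ 4 * C"
      using phi_nn[OF d, of w] phi_le[OF d, of w] hb[OF True] C0 by (intro mult_mono) auto
    finally show ?thesis using True by (simp add: indicator_def)
  next
    case False
    then show ?thesis using phi_zero[OF d, of w] by (simp add: indicator_def)
  qed
qed

end

lemma scale_bij: "c \<noteq> 0 \<Longrightarrow> bij (\<lambda>w::real^2. c *\<^sub>R w)"
  unfolding bij_def inj_on_def surj_def
  by (auto intro!: exI[of _ "(1/c) *\<^sub>R _"])

context
  fixes J :: "real \<Rightarrow> real"
  assumes adm: "admissible_kernel J"
begin

lemma mom_full:
  assumes d: "\<delta> > 0"
  shows "((\<lambda>w::real^2. J_delta J \<delta> (norm w) * (norm w)^2) has_integral 2) UNIV"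
proof -
  define f where "f = (\<lambda>z::real^2. J (norm z) * (norm z)^2)"
  have fi: "(f has_integral 2) UNIV" using adm_int[OF adm] by (simp add: f_def)
  have fabs: "f absolutely_integrable_on UNIV"
    using nonnegative_absolutely_integrable_1[OF has_integral_integrable[OF fi]] adm_nn[OF adm]
    by (simp add: f_def)
  define g where "g = (\<lambda>w::real^2. (1 / \<delta>) *\<^sub>R w)"
  have lin: "linear g" by (simp add: g_def linear_scaleR)
  have bij: "bij g" unfolding g_def using d by (intro scale_bij) simp
  have det: "\<bar>det (matrix g)\<bar> = 1 / \<delta>^2"
    using d by (simp add: g_def det_2 matrix_def axis_def power2_eq_square)
  define F where "F = (\<lambda>w. f (0 + g w))"
  have Fabs: "F absolutely_integrable_on UNIV" using cov_lin(1)[OF lin bij fabs, of 0] by (simp add: F_def)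
  have "integral UNIV f = \<bar>det (matrix g)\<bar> * integral UNIV F" using cov_lin(2)[OF lin bij fabs, of 0] by (simp add: F_def)
  then have "2 = 1 / \<delta>^2 * integral UNIV F" using det integral_unique[OF fi] by simp
  then have iF: "integral UNIV F = 2 * \<delta>^2" using d by (simp add: field_simps)
  have "(F has_integral (2 * \<delta>^2)) UNIV"
    using Fabs iF by (metis absolutely_integrable_on_def has_integral_integral)
  then have "((\<lambda>w. 1 / \<delta>^2 * F w) has_integral (1 / \<delta>^2 * (2 * \<delta>^2))) UNIV"
    by (rule has_integral_mult_right)
  moreover have "(\<lambda>w. 1 / \<delta>^2 * F w) = (\<lambda>w::real^2. J_delta J \<delta> (norm w) * (norm w)^2)"
    using d by (auto simp: F_def f_def g_def J_delta_def field_simps)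
  moreover have "1 / \<delta>^2 * (2 * \<delta>^2) = 2" using d by simp
  ultimately show ?thesis by simp
qed

lemma comp_bound: "norm (w::real^2) \<le> \<delta> \<Longrightarrow> \<bar>(w$i)^2\<bar> \<le> \<delta>^2"
proof -
  assume a: "norm w \<le> \<delta>"
  have "\<bar>w$i\<bar> \<le> \<delta>" using component_le_norm_cart[of w i] a by linarith
  then have "\<bar>w$i\<bar>^2 \<le> \<delta>^2" by (intro power_mono) auto
  then show ?thesis by simp
qed

lemma mom_comp:
  assumes d: "\<delta> > 0"
  shows "((\<lambda>w::real^2. J_delta J \<delta> (norm w) * (w$1)^2) has_integral 1) UNIV"
proof -
  define P where "P = (\<lambda>w::real^2. J_delta J \<delta> (norm w) * (w$1)^2)"
  define Q where "Q = (\<lambda>w::real^2. J_delta J \<delta> (norm w) * (w$2)^2)"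
  have m1: "(\<lambda>w::real^2. (w$1)^2) \<in> borel_measurable lebesgue" by (intro borel_to_leb) measurable
  have m2: "(\<lambda>w::real^2. (w$2)^2) \<in> borel_measurable lebesgue" by (intro borel_to_leb) measurable
  have Pa: "P absolutely_integrable_on UNIV"
    unfolding P_def by (rule phi_times_int[OF adm d m1 comp_bound])
  have Qa: "Q absolutely_integrable_on UNIV"
    unfolding Q_def by (rule phi_times_int[OF adm d m2 comp_bound])
  define s where "s = (\<lambda>w::real^2. (\<chi> i. if i = 1 then w$2 else w$1) :: real^2)"
  have s1: "s w $ 1 = w $ 2" "s w $ 2 = w $ 1" for w by (simp_all add: s_def)
  have slin: "linear s" unfolding s_def by (rule linearI) (simp_all add: vec_eq_iff)
  have sorth: "orthogonal_transformation s"
    by (rule orth2I[OF slin]) (simp add: s1)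
  have sn: "norm (s w) = norm w" for w using sorth by (simp add: orthogonal_transformation)
  have "integral UNIV (\<lambda>w. P (0 + s w)) = integral UNIV P" by (rule cov_orth(2)[OF sorth Pa])
  moreover have "(\<lambda>w. P (0 + s w)) = Q" by (auto simp: P_def Q_def sn s1)
  ultimately have PQ: "integral UNIV Q = integral UNIV P" by simp
  have Pi: "P integrable_on UNIV" "Q integrable_on UNIV" using Pa Qa by (auto simp: absolutely_integrable_on_def)
  have h0: "((\<lambda>w. P w + Q w) has_integral (integral UNIV P + integral UNIV Q)) UNIV"
    using Pi by (intro has_integral_add) (auto intro: integrable_integral)
  have "(\<lambda>w. P w + Q w) = (\<lambda>w::real^2. J_delta J \<delta> (norm w) * (norm w)^2)"
    by (auto simp: P_def Q_def norm2_sq algebra_simps)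
  then have h1: "((\<lambda>w::real^2. J_delta J \<delta> (norm w) * (norm w)^2) has_integral (integral UNIV P + integral UNIV Q)) UNIV"
    using h0 by simp
  have "integral UNIV P + integral UNIV Q = 2"
    by (rule has_integral_unique[OF h1 mom_full[OF d]])
  then have "integral UNIV P = 1" using PQ by simp
  then have "(P has_integral 1) UNIV" using integrable_integral[OF Pi(1)] by simp
  then show ?thesis unfolding P_def .
qed

lemma mom_half:
  assumes d: "\<delta> > 0"
  shows "((\<lambda>w::real^2. J_delta J \<delta> (norm w) * (if 0 < w$1 then (w$1)^2 else 0)) has_integral 1/2) UNIV"
proof -
  define Pp where "Pp = (\<lambda>w::real^2. J_delta J \<delta> (norm w) * (if 0 < w$1 then (w$1)^2 else 0))"
  define Pm where "Pm = (\<lambda>w::real^2. J_delta J \<delta> (norm w) * (if w$1 < 0 then (w$1)^2 else 0))"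
  have m1: "(\<lambda>w::real^2. if 0 < w$1 then (w$1)^2 else 0) \<in> borel_measurable lebesgue" by (intro borel_to_leb) measurable
  have m2: "(\<lambda>w::real^2. if w$1 < 0 then (w$1)^2 else 0) \<in> borel_measurable lebesgue" by (intro borel_to_leb) measurable
  have b1: "\<bar>if 0 < w$1 then (w$1)^2 else 0\<bar> \<le> \<delta>^2" if "norm w \<le> \<delta>" for w :: "real^2"
    using comp_bound[OF that, of 1] by auto
  have b2: "\<bar>if w$1 < 0 then (w$1)^2 else 0\<bar> \<le> \<delta>^2" if "norm w \<le> \<delta>" for w :: "real^2"
    using comp_bound[OF that, of 1] by auto
  have Pa: "Pp absolutely_integrable_on UNIV"
    unfolding Pp_def by (rule phi_times_int[OF adm d m1 b1])
  have Qa: "Pm absolutely_integrable_on UNIV"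
    unfolding Pm_def by (rule phi_times_int[OF adm d m2 b2])
  have rorth: "orthogonal_transformation (\<lambda>w::real^2. - w)"
    using orthogonal_transformation_neg[of "\<lambda>w. w"] orthogonal_transformation_id
    by (simp add: id_def)
  have "integral UNIV (\<lambda>w. Pp (0 + - w)) = integral UNIV Pp" by (rule cov_orth(2)[OF rorth Pa])
  moreover have "(\<lambda>w. Pp (0 + - w)) = Pm" by (auto simp: Pp_def Pm_def)
  ultimately have PQ: "integral UNIV Pm = integral UNIV Pp" by simp
  have Pi: "Pp integrable_on UNIV" "Pm integrable_on UNIV" using Pa Qa by (auto simp: absolutely_integrable_on_def)
  have h0: "((\<lambda>w. Pp w + Pm w) has_integral (integral UNIV Pp + integral UNIV Pm)) UNIV"
    using Pi by (intro has_integral_add) (auto intro: integrable_integral)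
  have "(\<lambda>w. Pp w + Pm w) = (\<lambda>w::real^2. J_delta J \<delta> (norm w) * (w$1)^2)"
    by (auto simp: Pp_def Pm_def algebra_simps)
  then have h1: "((\<lambda>w::real^2. J_delta J \<delta> (norm w) * (w$1)^2) has_integral (integral UNIV Pp + integral UNIV Pm)) UNIV"
    using h0 by simp
  have "integral UNIV Pp + integral UNIV Pm = 1"
    by (rule has_integral_unique[OF h1 mom_comp[OF d]])
  then have e: "integral UNIV Pp = 1/2" using PQ by simp
  have "(Pp has_integral integral UNIV Pp) UNIV" by (rule integrable_integral[OF Pi(1)])
  then have "(Pp has_integral 1/2) UNIV" by (simp only: e)
  then show ?thesis unfolding Pp_def .
qed

end

lemma main_estimate:
  fixes \<Omega> \<Gamma> :: "(real^2) set" and J :: "real \<Rightarrow> real" and x p \<nu> :: "real^2"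
  assumes adm: "admissible_kernel J" and op: "open \<Omega>"
    and d: "0 < \<delta>" and K: "K > 0"
    and xO: "x \<in> \<Omega>" and dd: "0 < dd" "dd \<le> \<delta>"
    and n1: "norm \<nu> = 1" and px: "p - x = dd *\<^sub>R \<nu>"
    and lt0: "\<And>z. z \<in> \<Omega> \<Longrightarrow> (z - p) \<bullet> \<nu> < 0"
    and deep: "\<And>y. y \<notin> \<Omega> \<Longrightarrow> dist y x \<le> \<delta> \<Longrightarrow> (y - p) \<bullet> \<nu> \<ge> - (4 * K * \<delta>^2)"
  shows "\<bar>integral (UNIV - \<Omega>) (\<lambda>y. J_delta J \<delta> (norm (x - y)) *
                 ((\<bar>(y - p) \<bullet> \<nu>\<bar>)^2 - (\<bar>(x - p) \<bullet> \<nu>\<bar>)^2))\<bar> \<le> 1/2 + 24 * K * J 0 * \<delta>"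
proof -
  define F0 where "F0 = (\<lambda>y. J_delta J \<delta> (norm (x - y)) *
                 ((\<bar>(y - p) \<bullet> \<nu>\<bar>)^2 - (\<bar>(x - p) \<bullet> \<nu>\<bar>)^2))"
  define F1 where "F1 = (\<lambda>y. if y \<in> UNIV - \<Omega> then F0 y else 0)"
  have I1: "integral (UNIV - \<Omega>) F0 = integral UNIV F1" unfolding F1_def by (rule integral_restrict_UNIV[symmetric])
  have nn: "\<nu> \<bullet> \<nu> = 1" using n1 by (simp add: norm_eq_1)
  have xpn: "(x - p) \<bullet> \<nu> = - dd"
  proof -
    have "x - p = - (dd *\<^sub>R \<nu>)" using px by (simp add: algebra_simps)
    then show ?thesis using nn by simp
  qed
  have J0: "J 0 > 0" by (rule adm_J0[OF adm])
  have mphx: "(\<lambda>y::real^2. J_delta J \<delta> (norm (x - y))) \<in> borel_measurable borel"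
  proof -
    have "(\<lambda>y::real^2. x - y) \<in> borel_measurable borel" by measurable
    from measurable_compose[OF this phi_meas[OF adm d]] show ?thesis by (simp add: o_def)
  qed
  have mpol: "(\<lambda>y::real^2. (\<bar>(y - p) \<bullet> \<nu>\<bar>)^2 - (\<bar>(x - p) \<bullet> \<nu>\<bar>)^2) \<in> borel_measurable borel" by measurable
  have mF0: "F0 \<in> borel_measurable borel" unfolding F0_def using mphx mpol by (rule borel_measurable_times)
  have cl: "closed (UNIV - \<Omega>)" using op by (simp add: Diff_eq closed_Compl)
  have mF1: "F1 \<in> borel_measurable lebesgue"
  proof (rule borel_to_leb)
    have "(UNIV - \<Omega>) \<inter> space borel \<in> sets borel" using borel_closed[OF cl] by simp
    then show "F1 \<in> borel_measurable borel" unfolding F1_def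
      by (rule measurable_If_set[OF mF0 borel_measurable_const])
  qed
  have F1b: "\<bar>F1 y\<bar> \<le> (J 0 / \<delta>^4 * (5 * \<delta>^2)) * indicator (cball x \<delta>) y" for y
  proof (cases "dist x y \<le> \<delta>")
    case True
    have a1: "\<bar>(y - p) \<bullet> \<nu>\<bar> \<le> 2 * \<delta>"
    proof -
      have "\<bar>(y - p) \<bullet> \<nu>\<bar> \<le> norm (y - p) * norm \<nu>" by (rule Cauchy_Schwarz_ineq2)
      also have "\<dots> = norm (y - p)" using n1 by simp
      also have "\<dots> \<le> norm (y - x) + norm (x - p)" using norm_diff_triangle_ineq[of y x x p] by simp
      also have "norm (x - p) = dd" using px n1 dd by (simp add: norm_minus_commute)
      finally show ?thesis using True dd by (simp add: dist_norm norm_minus_commute)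
    qed
    have a2: "(\<bar>(y - p) \<bullet> \<nu>\<bar>)^2 \<le> 4 * \<delta>^2"
    proof -
      have "(\<bar>(y - p) \<bullet> \<nu>\<bar>)^2 \<le> (2 * \<delta>)^2" using a1 by (intro power_mono) auto
      then show ?thesis by (simp add: power_mult_distrib)
    qed
    have a3: "(\<bar>(x - p) \<bullet> \<nu>\<bar>)^2 \<le> \<delta>^2" using xpn dd by (simp add: power_mono)
    have a4: "\<bar>(\<bar>(y - p) \<bullet> \<nu>\<bar>)^2 - (\<bar>(x - p) \<bullet> \<nu>\<bar>)^2\<bar> \<le> 5 * \<delta>^2"
    proof -
      have s1: "0 \<le> (\<bar>(y - p) \<bullet> \<nu>\<bar>)^2" "0 \<le> (\<bar>(x - p) \<bullet> \<nu>\<bar>)^2" by simp_all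
      show ?thesis unfolding abs_le_iff using a2 a3 s1 by linarith
    qed
    have "\<bar>F0 y\<bar> \<le> J 0 / \<delta>^4 * (5 * \<delta>^2)"
      unfolding F0_def abs_mult
      using phi_nn[OF adm d, of "x - y"] phi_le[OF adm d, of "x - y"] a4
      by (intro mult_mono) auto
    moreover have "0 \<le> J 0 / \<delta>^4 * (5 * \<delta>^2)" using J0 d by simp
    ultimately show ?thesis using True by (auto simp: F1_def indicator_def dist_commute)
  next
    case False
    then have "J_delta J \<delta> (norm (x - y)) = 0" using phi_zero[OF adm d, of "x - y"] by (simp add: dist_norm)
    then show ?thesis using False by (simp add: F1_def F0_def indicator_def dist_commute)
  qed
  have F1abs: "F1 absolutely_integrable_on UNIV" by (rule bcs_abs_integrable[OF mF1 F1b])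
  define R where "R = (\<lambda>w::real^2. (\<chi> i. if i = 1 then \<nu>$1 * w$1 - \<nu>$2 * w$2 else \<nu>$2 * w$1 + \<nu>$1 * w$2) :: real^2)"
  have R1: "R w $ 1 = \<nu>$1 * w$1 - \<nu>$2 * w$2" "R w $ 2 = \<nu>$2 * w$1 + \<nu>$1 * w$2" for w
    by (simp_all add: R_def)
  have nsq: "(\<nu>$1)^2 + (\<nu>$2)^2 = 1" using n1 norm2_sq[of \<nu>] by simp
  have Rlin: "linear R" unfolding R_def by (rule linearI) (simp_all add: vec_eq_iff algebra_simps)
  have Rorth: "orthogonal_transformation R"
  proof (rule orth2I[OF Rlin])
    fix w :: "real^2"
    have "((R w)$1)^2 + ((R w)$2)^2 = ((\<nu>$1)^2 + (\<nu>$2)^2) * ((w$1)^2 + (w$2)^2)"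
      unfolding R1 by (simp add: power2_eq_square algebra_simps)
    then show "((R w)$1)^2 + ((R w)$2)^2 = (w$1)^2 + (w$2)^2" using nsq by simp
  qed
  have Rn: "norm (R w) = norm w" for w using Rorth by (simp add: orthogonal_transformation)
  have R\<nu>: "R w \<bullet> \<nu> = w$1" for w
  proof -
    have "R w \<bullet> \<nu> = w$1 * ((\<nu>$1)^2 + (\<nu>$2)^2)"
      by (simp add: inner_vec_def sum_2 R1 power2_eq_square algebra_simps)
    then show ?thesis using nsq by simp
  qed
  have cov: "integral UNIV (\<lambda>w. F1 (x + R w)) = integral UNIV F1" by (rule cov_orth(2)[OF Rorth F1abs])
  define S where "S = {w. x + R w \<notin> \<Omega> \<and> w$1 < dd}"
  define hA where "hA = (\<lambda>w::real^2. if dd \<le> w$1 then (w$1)^2 - 2 * dd * w$1 else 0)"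
  define hB where "hB = (\<lambda>w::real^2. if w \<in> S then (w$1)^2 - 2 * dd * w$1 else 0)"
  define A where "A = (\<lambda>w. J_delta J \<delta> (norm w) * hA w)"
  define B where "B = (\<lambda>w. J_delta J \<delta> (norm w) * hB w)"
  have iy: "(x + R w - p) \<bullet> \<nu> = w$1 - dd" for w
  proof -
    have "(x + R w - p) \<bullet> \<nu> = (x - p) \<bullet> \<nu> + R w \<bullet> \<nu>"
      by (simp add: inner_add_left inner_diff_left)
    then show ?thesis using xpn R\<nu>[of w] by simp
  qed
  have dec: "F1 (x + R w) = A w + B w" for w
  proof -
    have nx: "norm (x - (x + R w)) = norm w" using Rn[of w] by simp
    have val: "(\<bar>(x + R w - p) \<bullet> \<nu>\<bar>)^2 - (\<bar>(x - p) \<bullet> \<nu>\<bar>)^2 = (w$1)^2 - 2 * dd * w$1"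
      unfolding iy xpn by (simp add: power2_eq_square algebra_simps)
    have val': "((x + R w - p) \<bullet> \<nu>)^2 - ((x - p) \<bullet> \<nu>)^2 = (w$1)^2 - 2 * dd * w$1"
      unfolding iy xpn by (simp add: power2_eq_square algebra_simps)
    show ?thesis
    proof (cases "dd \<le> w$1")
      case True
      have "x + R w \<notin> \<Omega>"
      proof
        assume "x + R w \<in> \<Omega>"
        then have "(x + R w - p) \<bullet> \<nu> < 0" by (rule lt0)
        then show False using True iy[of w] by simp
      qed
      moreover have "w \<notin> S" using True by (simp add: S_def)
      ultimately show ?thesis using True
        by (simp add: F1_def F0_def A_def B_def hA_def hB_def nx val val' Rn)
    next
      case False
      have "w \<in> S \<longleftrightarrow> x + R w \<notin> \<Omega>" using False by (simp add: S_def)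
      then show ?thesis using False
        by (simp add: F1_def F0_def A_def B_def hA_def hB_def nx val val' Rn)
    qed
  qed
  have hbound: "\<bar>(w$1)^2 - 2 * dd * w$1\<bar> \<le> 3 * \<delta>^2" if "norm w \<le> \<delta>" for w :: "real^2"
  proof -
    have w1: "\<bar>w$1\<bar> \<le> \<delta>" using component_le_norm_cart[of w 1] that by linarith
    have "\<bar>(w$1)^2 - 2 * dd * w$1\<bar> \<le> \<bar>(w$1)^2\<bar> + \<bar>2 * dd * w$1\<bar>" by (rule abs_triangle_ineq4)
    also have "\<dots> = \<bar>w$1\<bar>^2 + 2 * dd * \<bar>w$1\<bar>" using dd by (simp add: abs_mult)
    also have "\<dots> \<le> \<delta>^2 + 2 * \<delta> * \<delta>"
      using w1 dd by (intro add_mono mult_mono power_mono) auto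
    finally show ?thesis by (simp add: power2_eq_square)
  qed
  have mhA: "hA \<in> borel_measurable lebesgue" unfolding hA_def by (intro borel_to_leb) measurable
  have Sb: "S \<in> sets borel"
  proof -
    have cR: "continuous_on UNIV (\<lambda>w. x + R w)"
      using Rlin by (intro continuous_intros) (simp add: linear_continuous_on linear_conv_bounded_linear)
    have c1: "closed ((\<lambda>w. x + R w) -` (UNIV - \<Omega>))" by (rule closed_vimage[OF cl cR])
    have o1: "open {w::real^2. w$1 < dd}" by (intro open_Collect_less continuous_intros)
    have "S = ((\<lambda>w. x + R w) -` (UNIV - \<Omega>)) \<inter> {w::real^2. w$1 < dd}" by (auto simp: S_def)
    then show ?thesis using borel_closed[OF c1] borel_open[OF o1] by simp
  qed
  have mhB: "hB \<in> borel_measurable lebesgue"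
  proof (rule borel_to_leb)
    have m: "(\<lambda>w::real^2. (w$1)^2 - 2 * dd * w$1) \<in> borel_measurable borel" by measurable
    show "hB \<in> borel_measurable borel" unfolding hB_def
      by (rule measurable_If_set[OF m borel_measurable_const]) (use Sb in simp)
  qed
  have bA: "\<bar>hA w\<bar> \<le> 3 * \<delta>^2" if "norm w \<le> \<delta>" for w
    using hbound[OF that] d by (simp add: hA_def)
  have bB: "\<bar>hB w\<bar> \<le> 3 * \<delta>^2" if "norm w \<le> \<delta>" for w
    using hbound[OF that] d by (simp add: hB_def)
  have Aabs: "A absolutely_integrable_on UNIV" unfolding A_def by (rule phi_times_int[OF adm d mhA bA])
  have Babs: "B absolutely_integrable_on UNIV" unfolding B_def by (rule phi_times_int[OF adm d mhB bB])
  have Ai: "A integrable_on UNIV" and Bi: "B integrable_on UNIV"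
    using Aabs Babs by (auto simp: absolutely_integrable_on_def)
  have "(\<lambda>w. F1 (x + R w)) = (\<lambda>w. A w + B w)" using dec by auto
  then have isum: "integral UNIV F1 = integral UNIV A + integral UNIV B"
    using cov integral_add[OF Ai Bi] by simp
  define E where "E = (\<lambda>w::real^2. J_delta J \<delta> (norm w) * (if 0 < w$1 then (w$1)^2 else 0))"
  have Eint: "(E has_integral 1/2) UNIV" unfolding E_def by (rule mom_half[OF adm d])
  have AE: "norm (A w) \<le> E w" for w
  proof -
    have "\<bar>hA w\<bar> \<le> (if 0 < w$1 then (w$1)^2 else 0)"
    proof (cases "dd \<le> w$1")
      case True
      then have w0: "0 < w$1" using dd by linarith
      have "\<bar>w$1 - 2 * dd\<bar> \<le> w$1" using True dd by (simp add: abs_le_iff)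
      then have "\<bar>w$1\<bar> * \<bar>w$1 - 2 * dd\<bar> \<le> \<bar>w$1\<bar> * w$1" by (intro mult_left_mono) auto
      moreover have "(w$1)^2 - 2 * dd * w$1 = w$1 * (w$1 - 2 * dd)" by (simp add: power2_eq_square algebra_simps)
      ultimately show ?thesis using True w0 by (simp add: hA_def abs_mult power2_eq_square)
    next
      case False
      then show ?thesis by (simp add: hA_def)
    qed
    then have "J_delta J \<delta> (norm w) * \<bar>hA w\<bar> \<le> J_delta J \<delta> (norm w) * (if 0 < w$1 then (w$1)^2 else 0)"
      using phi_nn[OF adm d, of w] by (intro mult_left_mono) auto
    then show ?thesis using phi_nn[OF adm d, of w] by (simp add: A_def E_def abs_mult)
  qed
  have boundA: "\<bar>integral UNIV A\<bar> \<le> 1/2"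
  proof -
    have "norm (integral UNIV A) \<le> integral UNIV E"
      by (rule integral_norm_bound_integral[OF Ai has_integral_integrable[OF Eint]]) (use AE in simp)
    then show ?thesis using integral_unique[OF Eint] by simp
  qed
  define lo where "lo = (vector [dd - 4 * K * \<delta>^2, - \<delta>] :: real^2)"
  define hi where "hi = (vector [dd, \<delta>] :: real^2)"
  define c where "c = 3 * J 0 / \<delta>^2"
  have c0: "0 \<le> c" using J0 d by (simp add: c_def)
  define Bd where "Bd = (\<lambda>w::real^2. if w \<in> cbox lo hi then c else 0)"
  have loin: "lo \<in> cbox lo hi" using K d by (simp add: mem_box_cart forall_2 lo_def hi_def)
  have cont: "Henstock_Kurzweil_Integration.content (cbox lo hi) = 8 * K * \<delta>^3"
  proof -
    have "Henstock_Kurzweil_Integration.content (cbox lo hi) = (\<Prod>i\<in>UNIV. hi $ i - lo $ i)"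
      using loin by (intro content_cbox_cart) auto
    also have "\<dots> = (hi$1 - lo$1) * (hi$2 - lo$2)" by (simp add: UNIV_2)
    also have "\<dots> = 8 * K * \<delta>^3" by (simp add: lo_def hi_def power2_eq_square power3_eq_cube algebra_simps)
    finally show ?thesis .
  qed
  have Bdint: "(Bd has_integral (8 * K * \<delta>^3 * c)) UNIV"
  proof -
    have "((\<lambda>w::real^2. c) has_integral (Henstock_Kurzweil_Integration.content (cbox lo hi) *\<^sub>R c)) (cbox lo hi)"
      by (rule has_integral_const)
    then have "((\<lambda>w::real^2. c) has_integral (8 * K * \<delta>^3 * c)) (cbox lo hi)" using cont by simp
    then show ?thesis unfolding Bd_def by (simp add: has_integral_restrict_UNIV)
  qed
  have BB: "norm (B w) \<le> Bd w" for w
  proof (cases "w \<in> S \<and> norm w \<le> \<delta>")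
    case True
    then have wS: "x + R w \<notin> \<Omega>" "w$1 < dd" and wn: "norm w \<le> \<delta>" by (auto simp: S_def)
    have "dist (x + R w) x \<le> \<delta>" using Rn[of w] wn by (simp add: dist_norm)
    then have "(x + R w - p) \<bullet> \<nu> \<ge> - (4 * K * \<delta>^2)" using deep[OF wS(1)] by simp
    then have w1: "dd - 4 * K * \<delta>^2 \<le> w$1" using iy[of w] by simp
    have w2: "\<bar>w$2\<bar> \<le> \<delta>" using component_le_norm_cart[of w 2] wn by linarith
    have inbox: "w \<in> cbox lo hi" using w1 wS(2) w2 by (simp add: mem_box_cart forall_2 lo_def hi_def abs_le_iff)
    have "\<bar>B w\<bar> = J_delta J \<delta> (norm w) * \<bar>hB w\<bar>" using phi_nn[OF adm d, of w] by (simp add: B_def abs_mult)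
    also have "\<dots> \<le> J 0 / \<delta>^4 * (3 * \<delta>^2)"
      using phi_nn[OF adm d, of w] phi_le[OF adm d, of w] bB[OF wn] by (intro mult_mono) auto
    also have "\<dots> = c" using d by (simp add: c_def field_simps power2_eq_square power4_eq_xxxx)
    finally show ?thesis using inbox by (simp add: Bd_def)
  next
    case False
    have "B w = 0"
    proof -
      from False consider "w \<notin> S" | "norm w > \<delta>" by (auto simp: not_le)
      then show "B w = 0"
      proof cases
        case 1 then show ?thesis by (simp add: B_def hB_def)
      next
        case 2 then show ?thesis using phi_zero[OF adm d 2] by (simp add: B_def)
      qed
    qed
    then show ?thesis using c0 by (simp add: Bd_def)
  qed
  have boundB: "\<bar>integral UNIV B\<bar> \<le> 24 * K * J 0 * \<delta>"
  proof -
    have "norm (integral UNIV B) \<le> integral UNIV Bd"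
      by (rule integral_norm_bound_integral[OF Bi has_integral_integrable[OF Bdint]]) (use BB in simp)
    also have "\<dots> = 8 * K * \<delta>^3 * c" using integral_unique[OF Bdint] .
    also have "\<dots> = 24 * K * J 0 * \<delta>" using d by (simp add: c_def power2_eq_square power3_eq_cube field_simps)
    finally show ?thesis by simp
  qed
  have "integral (UNIV - \<Omega>) F0 = integral UNIV A + integral UNIV B" using I1 isum by simp
  then show ?thesis using boundA boundB unfolding F0_def by (simp add: abs_le_iff; linarith)
qed

theorem lemma1:
  fixes \<Omega> \<Gamma> :: "(real^2) set" and J :: "real \<Rightarrow> real"
  assumes "bounded \<Omega>" and "connected \<Omega>" and "convex \<Omega>" and "open \<Omega>"
    and "C3_boundary \<Omega>"
    and "boundary_curve \<Omega> \<Gamma>"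
    and "admissible_kernel J"
  shows "\<exists>\<delta>b>0. \<exists>Cq>0. \<forall>\<delta>. 0 < \<delta> \<and> \<delta> \<le> \<delta>b \<longrightarrow>
           (\<forall>x\<in>B_Omega \<Omega> \<Gamma> \<delta>.
              0 < 1/2 - Cq * \<delta> \<and> 1/2 - Cq * \<delta> \<le> Q_delta J \<Omega> \<delta> x \<and>
              Q_delta J \<Omega> \<delta> x \<le> 3/2 + Cq * \<delta>)"
proof -
  note op = assms(4) and cv = assms(3) and adm = assms(7)
  obtain r0 K where r0: "r0 > 0" and K: "K > 0" and geo: "\<forall>p\<in>frontier \<Omega>. \<exists>v::real^2. v \<noteq> 0 \<and>
      (\<forall>\<mu>. tanlim \<Omega> p \<mu> \<longrightarrow> \<mu> \<bullet> v = 0) \<and>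
      (\<forall>\<nu>. norm \<nu> = 1 \<longrightarrow> \<nu> \<bullet> v = 0 \<longrightarrow>
        (\<forall>q\<in>frontier \<Omega>. dist q p < r0 \<longrightarrow> \<bar>(q - p) \<bullet> \<nu>\<bar> \<le> K * (dist q p)^2))"
    using curve_main[OF assms(5)] by blast
  define J0 where "J0 = J 0"
  have J0: "J0 > 0" using adm_J0[OF adm] by (simp add: J0_def)
  define Cq where "Cq = 24 * K * J0 + 1"
  have Cq: "Cq > 0" using K J0 by (simp add: Cq_def add_pos_nonneg)
  have CqK: "24 * K * J0 \<le> Cq" by (simp add: Cq_def)
  define \<delta>b where "\<delta>b = min (min r0 (1 / K) / 4) (1 / (4 * Cq))"
  have \<delta>b: "\<delta>b > 0" using r0 K Cq by (simp add: \<delta>b_def)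
  have \<delta>b1: "\<delta>b \<le> min r0 (1 / K) / 4" unfolding \<delta>b_def by (rule min.cobounded1)
  have \<delta>b2: "\<delta>b \<le> 1 / (4 * Cq)" unfolding \<delta>b_def by (rule min.cobounded2)
  have main: "0 < 1/2 - Cq * \<delta> \<and> 1/2 - Cq * \<delta> \<le> Q_delta J \<Omega> \<delta> x \<and> Q_delta J \<Omega> \<delta> x \<le> 3/2 + Cq * \<delta>"
    if \<delta>: "0 < \<delta>" "\<delta> \<le> \<delta>b" and xB: "x \<in> B_Omega \<Omega> \<Gamma> \<delta>" for \<delta> x
  proof -
    have xO: "x \<in> \<Omega>" and x\<Gamma>: "infdist x \<Gamma> \<le> \<delta>" using xB by (auto simp: B_Omega_def)
    have \<Gamma>F: "\<Gamma> \<subseteq> frontier \<Omega>" using assms(6) by (simp add: boundary_curve_def)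
    have \<Gamma>ne: "\<Gamma> \<noteq> {}" using assms(6) path_image_nonempty by (auto simp: boundary_curve_def)
    have Fc: "closed (frontier \<Omega>)" by simp
    have Fne: "frontier \<Omega> \<noteq> {}" using \<Gamma>F \<Gamma>ne by blast
    obtain p0 where "p0 \<in> frontier \<Omega>" "infdist x (frontier \<Omega>) = dist x p0"
      by (rule infdist_attains_inf[OF Fc Fne])
    then have ex: "\<exists>p. p \<in> frontier \<Omega> \<and> dist x p = infdist x (frontier \<Omega>)" by metis
    define p where "p = proj_bd \<Omega> x"
    have p: "p \<in> frontier \<Omega>" "dist x p = infdist x (frontier \<Omega>)"
      using someI_ex[OF ex] unfolding p_def proj_bd_def by blast+
    have xF: "x \<notin> frontier \<Omega>" using frontier_notin_open[OF op] xO by blast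
    have dd0: "0 < dist x p"
    proof -
      have "infdist x (frontier \<Omega>) \<noteq> 0" using in_closed_iff_infdist_zero[OF Fc Fne, of x] xF by simp
      then show ?thesis using p(2) infdist_nonneg[of x "frontier \<Omega>"] by simp
    qed
    have dd\<delta>: "dist x p \<le> \<delta>"
      using p(2) infdist_mono[OF \<Gamma>F \<Gamma>ne, of x] x\<Gamma> by simp
    have ball: "ball x (dist x p) \<subseteq> \<Omega>"
    proof
      fix z assume z: "z \<in> ball x (dist x p)"
      show "z \<in> \<Omega>"
      proof (rule ccontr)
        assume zO: "z \<notin> \<Omega>"
        have "ball x (dist x p) \<inter> frontier \<Omega> \<noteq> {}"
        proof (rule connected_Int_frontier)
          show "connected (ball x (dist x p))" by simp
          have "x \<in> ball x (dist x p) \<inter> \<Omega>" using xO dd0 by simp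
          then show "ball x (dist x p) \<inter> \<Omega> \<noteq> {}" by blast
          show "ball x (dist x p) - \<Omega> \<noteq> {}" using z zO by auto
        qed
        then obtain q where q: "q \<in> ball x (dist x p)" "q \<in> frontier \<Omega>" by blast
        have "infdist x (frontier \<Omega>) \<le> dist x q" by (rule infdist_le[OF q(2)])
        then show False using q(1) p(2) by simp
      qed
    qed
    obtain v where v: "v \<noteq> (0::real^2)" and tp: "\<forall>\<mu>. tanlim \<Omega> p \<mu> \<longrightarrow> \<mu> \<bullet> v = 0"
      and qd: "\<forall>\<nu>. norm \<nu> = 1 \<longrightarrow> \<nu> \<bullet> v = 0 \<longrightarrow>
        (\<forall>q\<in>frontier \<Omega>. dist q p < r0 \<longrightarrow> \<bar>(q - p) \<bullet> \<nu>\<bar> \<le> K * (dist q p)^2)"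
      using geo p(1) by blast
    define \<nu> where "\<nu> = (p - x) /\<^sub>R dist x p"
    have tp': "\<And>\<mu>. tanlim \<Omega> p \<mu> \<Longrightarrow> \<mu> \<bullet> v = 0" using tp by blast
    note NL = normal_lemma[OF op cv xO p(1) dd0 ball v tp']
    have en: "ext_normal \<Omega> p = \<nu>" using NL(1) by (simp add: \<nu>_def)
    have lt0: "\<And>z. z \<in> \<Omega> \<Longrightarrow> (z - p) \<bullet> \<nu> < 0" using NL(2) by (simp add: \<nu>_def)
    have \<nu>v: "\<nu> \<bullet> v = 0" using NL(3) by (simp add: \<nu>_def)
    have n1: "norm \<nu> = 1" using NL(4) by (simp add: \<nu>_def)
    have quad: "\<And>q. q \<in> frontier \<Omega> \<Longrightarrow> dist q p < r0 \<Longrightarrow> \<bar>(q - p) \<bullet> \<nu>\<bar> \<le> K * (dist q p)^2"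
      using qd n1 \<nu>v by blast
    define dd where "dd = dist x p"
    have px: "p - x = dd *\<^sub>R \<nu>" using dd0 by (simp add: \<nu>_def dd_def)
    have ray: "p - t *\<^sub>R \<nu> \<in> \<Omega>" if t: "0 < t" "t < dd" for t
    proof -
      have "p - t *\<^sub>R \<nu> = x + (dd - t) *\<^sub>R \<nu>" using px by (simp add: algebra_simps)
      moreover have "dist x (x + (dd - t) *\<^sub>R \<nu>) < dist x p" using t n1 by (simp add: dist_norm dd_def)
      ultimately show ?thesis using ball by auto
    qed
    have \<delta>2: "2 * \<delta> < r0" "2 * \<delta> < 1 / K"
    proof -
      have "\<delta> \<le> min r0 (1 / K) / 4" using \<delta>(2) \<delta>b1 by linarith
      then show "2 * \<delta> < r0" "2 * \<delta> < 1 / K" using \<delta>(1) r0 K by auto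
    qed
    have dd0': "0 < dd" using dd0 by (simp add: dd_def)
    have deep: "\<And>y. y \<notin> \<Omega> \<Longrightarrow> dist y x \<le> \<delta> \<Longrightarrow> (y - p) \<bullet> \<nu> \<ge> - (4 * K * \<delta>^2)"
      using deep_lemma[OF op p(1) n1 K quad dd0' ray \<delta>(1) \<delta>2] dd\<delta> by (simp add: dist_commute)
    have est: "\<bar>integral (UNIV - \<Omega>) (\<lambda>y. J_delta J \<delta> (norm (x - y)) *
                 ((\<bar>(y - p) \<bullet> \<nu>\<bar>)^2 - (\<bar>(x - p) \<bullet> \<nu>\<bar>)^2))\<bar> \<le> 1/2 + 24 * K * J 0 * \<delta>"
      by (rule main_estimate[OF adm op \<delta>(1) K xO dd0' _ n1 px lt0 deep]) (use dd\<delta> in \<open>simp add: dd_def\<close>)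
    have Qeq: "Q_delta J \<Omega> \<delta> x = 1 - integral (UNIV - \<Omega>) (\<lambda>y. J_delta J \<delta> (norm (x - y)) *
                 ((\<bar>(y - p) \<bullet> \<nu>\<bar>)^2 - (\<bar>(x - p) \<bullet> \<nu>\<bar>)^2))"
      unfolding Q_delta_def Let_def p_def[symmetric] en ..
    have c1: "Cq * \<delta> \<le> 1 / 4"
    proof -
      have "Cq * \<delta> \<le> Cq * (1 / (4 * Cq))" using \<delta> \<delta>b2 Cq by (intro mult_left_mono) auto
      then show ?thesis using Cq by simp
    qed
    have c2: "24 * K * J 0 * \<delta> \<le> Cq * \<delta>" using CqK \<delta>(1) by (simp add: J0_def mult_right_mono)
    show ?thesis using est Qeq c1 c2 by (simp add: abs_le_iff; linarith)
  qed
  show ?thesis using \<delta>b Cq main by blast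
qed

end
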